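(* Let $(i,j,t,u,v)$ be an arbitrary permutation of $(1,2,3,4,5)$. The following monomials in $P_5$ are strictly inadmissible: (i) $x_i^{7}x_j^{9}x_t^{2}x_u^{15}x_v^{15}$, $x_i^{3}x_j^{7}x_t^{8}x_u^{15}x_v^{15}$, $x_i^{7}x_j^{3}x_t^{8}x_u^{15}x_v^{15}$, $x_i^{7}x_j^{8}x_t^{3}x_u^{15}x_v^{15}$, for $i<j<t$; (ii) $x_r^{15}\theta_{J_r}(w)$ for $1\le r\le5$ and $w$ one of $x_1^{7}x_2^{8}x_3^{7}x_4^{11}$, $x_1^{7}x_2^{9}x_3^{3}x_4^{14}$, $x_1^{7}x_2^{9}x_3^{6}x_4^{11}$, $x_1^{7}x_2^{9}x_3^{7}x_4^{10}$, $x_1^{7}x_2^{9}x_3^{14}x_4^{3}$, $x_1^{7}x_2^{11}x_3^{7}x_4^{8}$; (iii) $x_1^{7}x_2^{9}x_3^{7}x_4^{14}x_5^{11}$ and $x_1^{7}x_2^{9}x_3^{14}x_4^{7}x_5^{11}$.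
   Context: $P_k=\mathbb F_2[x_1,\dots,x_k]$, $\deg x_i=1$, with the standard action of the mod-2 Steenrod algebra $\mathcal A$. $\mathcal A_s$ is the sub-Hopf algebra generated by $Sq^i$, $0\le i\le2^s$, and $\mathcal A_s^+=\mathcal A^+\cap\mathcal A_s$. For a monomial $x$, $\nu_j(x)$ is the exponent of $x_j$, $\alpha_i(a)$ the $i$-th binary digit of $a$, $\omega(x)=(\omega_i(x))$ with $\omega_i(x)=\sum_j\alpha_{i-1}(\nu_j(x))$, $\sigma(x)=(\nu_1(x),\dots,\nu_k(x))$, both ordered left-lexicographically; for monomials of equal degree $u<v$ iff $\omega(u)<\omega(v)$, or $\omega(u)=\omega(v)$ and $\sigma(u)<\sigma(v)$. A monomial $u$ is strictly inadmissible if there exist monomials $v_1,\dots,v_r<u$ with $u+\sum_jv_j\in\mathcal A_{s-1}^+P_k$, where $s=\max\{i:\omega_i(u)>0\}$. For $1\le r\le5$, $J_r=(1,\dots,\hat r,\dots,5)$ and $\theta_{J_r}:P_4\to P_5$ is the algebra map sending $x_t$ to the variable indexed by the $t$-th entry of $J_r$. *)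

theory Defs
  imports Main
begin

text \<open>Monomials of P_k = F_2[x_1,...,x_k] are exponent functions nat => nat supported
 on {1..k} (value at n = exponent of x_n).  Polynomials over F_2 are finite sets of
 monomials (the monomials with coefficient 1); addition is symmetric difference.\<close>

type_synonym mono = "nat \<Rightarrow> nat"
type_synonym poly = "mono set"

definition is_mono :: "nat \<Rightarrow> mono \<Rightarrow> bool" where
  "is_mono k e \<longleftrightarrow> (\<forall>n. n \<notin> {1..k} \<longrightarrow> e n = 0)"

definition polys :: "nat \<Rightarrow> poly set" where
  "polys k = {f. finite f \<and> (\<forall>e\<in>f. is_mono k e)}"

definition padd :: "poly \<Rightarrow> poly \<Rightarrow> poly" where
  "padd f g = (f - g) \<union> (g - f)"

definition mon :: "(nat \<times> nat) list \<Rightarrow> mono" where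
  "mon ps n = sum_list [e. (m, e) \<leftarrow> ps, m = n]"

definition mmul :: "mono \<Rightarrow> mono \<Rightarrow> mono" where
  "mmul a b n = a n + b n"

definition deg :: "nat \<Rightarrow> mono \<Rightarrow> nat" where
  "deg k e = (\<Sum>n\<in>{1..k}. e n)"

text \<open>Standard action: Sq^a(x_1^{e_1}...x_k^{e_k}) = sum over d with |d| = a of
 prod_n binom(e_n,d_n) x^{e+d} (Cartan formula and Sq^a x^e = binom(e,a) x^{e+a}).\<close>
definition sq_mono :: "nat \<Rightarrow> nat \<Rightarrow> mono \<Rightarrow> poly" where
  "sq_mono k a e = {(\<lambda>n. e n + d n) | d. (\<forall>n. n \<notin> {1..k} \<longrightarrow> d n = 0)
      \<and> (\<Sum>n\<in>{1..k}. d n) = a \<and> odd (\<Prod>n\<in>{1..k}. (e n choose d n))}"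

definition Sq :: "nat \<Rightarrow> nat \<Rightarrow> poly \<Rightarrow> poly" where
  "Sq k a f = {m. odd (card {e\<in>f. m \<in> sq_mono k a e})}"

text \<open>hitsp k s = A_s^+ P_k, where A_s is generated by Sq^i, 0 <= i <= 2^s.
 Since Sq^0 = 1, A_s^+ P_k is the F_2-span of the images Sq^i(P_k), 1 <= i <= 2^s.\<close>
inductive_set hitsp :: "nat \<Rightarrow> nat \<Rightarrow> poly set" for k s where
  zero: "{} \<in> hitsp k s"
| gen: "f \<in> polys k \<Longrightarrow> 1 \<le> i \<Longrightarrow> i \<le> 2 ^ s \<Longrightarrow> Sq k i f \<in> hitsp k s"
| add: "f \<in> hitsp k s \<Longrightarrow> g \<in> hitsp k s \<Longrightarrow> padd f g \<in> hitsp k s"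

text \<open>omega_i(x) = sum_j alpha_{i-1}(nu_j(x)), for i >= 1 (value at 0 is irrelevant: 0).\<close>
definition omega :: "nat \<Rightarrow> mono \<Rightarrow> nat \<Rightarrow> nat" where
  "omega k e i = (if i = 0 then 0 else (\<Sum>j\<in>{1..k}. (e j div 2 ^ (i - 1)) mod 2))"

definition lexless :: "(nat \<Rightarrow> nat) \<Rightarrow> (nat \<Rightarrow> nat) \<Rightarrow> bool" where
  "lexless a b \<longleftrightarrow> (\<exists>i. (\<forall>j<i. a j = b j) \<and> a i < b i)"

definition mono_less :: "nat \<Rightarrow> mono \<Rightarrow> mono \<Rightarrow> bool" where
  "mono_less k u v \<longleftrightarrow> deg k u = deg k v \<and>
     (lexless (omega k u) (omega k v) \<or> (omega k u = omega k v \<and> lexless u v))"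

definition strictly_inadmissible :: "nat \<Rightarrow> mono \<Rightarrow> bool" where
  "strictly_inadmissible k u \<longleftrightarrow> is_mono k u \<and>
     (let s = Max {i. 1 \<le> i \<and> 0 < omega k u i} in
      \<exists>V. finite V \<and> (\<forall>v\<in>V. is_mono k v \<and> mono_less k v u) \<and>
          padd {u} V \<in> hitsp k (s - 1))"

definition Jr :: "nat \<Rightarrow> nat \<Rightarrow> nat" where
  "Jr r t = (if t < r then t else t + 1)"

definition theta :: "nat \<Rightarrow> mono \<Rightarrow> mono" where
  "theta r w n = (\<Sum>t\<in>{t\<in>{1..4}. Jr r t = n}. w t)"

end

theory Submission
  imports Defs
begin



definition tm :: "nat list \<Rightarrow> mono" where
  "tm xs n = (if n = 0 then 0 else if n \<le> length xs then xs ! (n - 1) else 0)"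

lemma tm_inj: assumes l: "length xs = length ys" and e: "tm xs = tm ys" shows "xs = ys"
proof (rule nth_equalityI)
  show "length xs = length ys" by fact
  fix i assume i: "i < length xs"
  from fun_cong[OF e, of "Suc i"] show "xs!i = ys!i" using l i by (simp add: tm_def)
qed

lemma inj_tm: "inj_on tm {xs. length xs = k}"
  by (auto intro!: inj_onI tm_inj)

lemma is_mono_tm: "length xs \<le> k \<Longrightarrow> is_mono k (tm xs)"
  by (auto simp: is_mono_def tm_def)

lemma sum_tm: "length ds = k \<Longrightarrow> (\<Sum>n\<in>{1..k}. tm ds n) = sum_list ds"
proof -
  assume l: "length ds = k"
  have "\<And>f::nat\<Rightarrow>nat. (\<Sum>n\<in>{1..k}. f n) = (\<Sum>i<k. f (Suc i))"
    by (induction k) (auto simp: atLeastAtMostSuc_conv)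
  then have "(\<Sum>n\<in>{1..k}. tm ds n) = (\<Sum>i<k. tm ds (Suc i))" .
  also have "\<dots> = (\<Sum>i<k. ds ! i)" using l by (intro sum.cong) (auto simp: tm_def)
  also have "\<dots> = sum_list ds" using l by (simp add: sum_list_sum_nth atLeast0LessThan)
  finally show ?thesis .
qed

lemma Sq_empty: "Sq k a {} = {}" by (simp add: Sq_def)

lemma Sq_single: "Sq k a {e} = sq_mono k a e"
proof -
  have "\<And>m. {e'\<in>{e}. m \<in> sq_mono k a e'} = (if m \<in> sq_mono k a e then {e} else {})" by auto
  then show ?thesis by (auto simp: Sq_def)
qed

lemma sq_mono_tm:
  assumes l: "length xs = k"
  shows "sq_mono k a (tm xs) = tm ` {map2 (+) xs ds | ds. length ds = k \<and> sum_list ds = a \<and>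
            (\<forall>i<k. odd (xs!i choose ds!i))}"
proof
  show "sq_mono k a (tm xs) \<subseteq> tm ` {map2 (+) xs ds | ds. length ds = k \<and> sum_list ds = a \<and>
            (\<forall>i<k. odd (xs!i choose ds!i))}"
  proof
    fix m assume "m \<in> sq_mono k a (tm xs)"
    then obtain d where m: "m = (\<lambda>n. tm xs n + d n)" and supp: "\<forall>n. n \<notin> {1..k} \<longrightarrow> d n = 0"
      and s: "(\<Sum>n\<in>{1..k}. d n) = a" and o: "odd (\<Prod>n\<in>{1..k}. (tm xs n choose d n))"
      unfolding sq_mono_def by blast
    define ds where "ds = map (\<lambda>i. d (Suc i)) [0..<k]"
    have lds: "length ds = k" by (simp add: ds_def)
    have dtm: "d = tm ds"
    proof
      fix n show "d n = tm ds n" using supp by (cases n) (auto simp: tm_def ds_def)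
    qed
    have "sum_list ds = a" using s sum_tm[OF lds] dtm by simp
    moreover have "\<forall>i<k. odd (xs!i choose ds!i)"
    proof (intro allI impI)
      fix i assume "i < k"
      then have "Suc i \<in> {1..k}" by auto
      with o have "odd (tm xs (Suc i) choose d (Suc i))" by (auto simp: even_prod_iff)
      then show "odd (xs!i choose ds!i)" using \<open>i<k\<close> l by (simp add: tm_def ds_def)
    qed
    moreover have "m = tm (map2 (+) xs ds)"
    proof
      fix n show "m n = tm (map2 (+) xs ds) n"
        unfolding m dtm using l lds by (auto simp: tm_def)
    qed
    ultimately show "m \<in> tm ` {map2 (+) xs ds | ds. length ds = k \<and> sum_list ds = a \<and>
            (\<forall>i<k. odd (xs!i choose ds!i))}" using lds by blast
  qed
next
  show "tm ` {map2 (+) xs ds | ds. length ds = k \<and> sum_list ds = a \<and>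
            (\<forall>i<k. odd (xs!i choose ds!i))} \<subseteq> sq_mono k a (tm xs)"
  proof
    fix m assume "m \<in> tm ` {map2 (+) xs ds | ds. length ds = k \<and> sum_list ds = a \<and>
            (\<forall>i<k. odd (xs!i choose ds!i))}"
    then obtain ds where m: "m = tm (map2 (+) xs ds)" and lds: "length ds = k"
      and s: "sum_list ds = a" and o: "\<forall>i<k. odd (xs!i choose ds!i)" by blast
    have supp: "\<forall>n. n \<notin> {1..k} \<longrightarrow> tm ds n = 0" using lds by (auto simp: tm_def)
    have s': "(\<Sum>n\<in>{1..k}. tm ds n) = a" using sum_tm[OF lds] s by simp
    have o': "odd (\<Prod>n\<in>{1..k}. (tm xs n choose tm ds n))"
    proof -
      have "\<forall>n\<in>{1..k}. odd (tm xs n choose tm ds n)"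
      proof
        fix n assume n: "n \<in> {1..k}"
        then have "n - 1 < k" by auto
        with o have "odd (xs!(n-1) choose ds!(n-1))" by blast
        then show "odd (tm xs n choose tm ds n)" using n l lds by (auto simp: tm_def)
      qed
      then show ?thesis by (auto simp: even_prod_iff)
    qed
    have "m = (\<lambda>n. tm xs n + tm ds n)"
    proof
      fix n show "m n = tm xs n + tm ds n" unfolding m using l lds by (auto simp: tm_def)
    qed
    then show "m \<in> sq_mono k a (tm xs)" unfolding sq_mono_def using supp s' o' by blast
  qed
qed

definition allow :: "nat \<Rightarrow> nat \<Rightarrow> nat list" where
  "allow a x = filter (\<lambda>d. odd (x choose d)) [0..<Suc a]"

fun dsL :: "nat \<Rightarrow> nat list list \<Rightarrow> nat list list"
and dsH :: "nat \<Rightarrow> nat list \<Rightarrow> nat list list \<Rightarrow> nat list list" where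
  "dsL a [] = (if a = 0 then [[]] else [])"
| "dsL a (L # Ls) = dsH a L Ls"
| "dsH a [] Ls = []"
| "dsH a (d # ds) Ls = (if d \<le> a then map (Cons d) (dsL (a - d) Ls) else []) @ dsH a ds Ls"

lemma dsH_eq: "dsH a L Ls = concat (map (\<lambda>d. if d \<le> a then map (Cons d) (dsL (a - d) Ls) else []) L)"
  by (induction L) auto

lemma dsL_Cons: "dsL a (L # Ls) = concat (map (\<lambda>d. if d \<le> a then map (Cons d) (dsL (a - d) Ls) else []) L)"
  by (simp add: dsH_eq)

declare dsL.simps(2)[simp del] dsH.simps[simp del]

lemma set_dsL: "b \<le> a \<Longrightarrow> set (dsL b (map (allow a) xs)) =
   {ds. length ds = length xs \<and> sum_list ds = b \<and> (\<forall>i<length xs. odd (xs!i choose ds!i))}"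
proof (induction xs arbitrary: b)
  case Nil
  then show ?case by auto
next
  case (Cons x xs)
  show ?case
  proof (rule set_eqI, rule iffI)
    fix ds assume "ds \<in> set (dsL b (map (allow a) (x # xs)))"
    then obtain d ds' where ds: "ds = d # ds'" and d: "d \<le> b" "odd (x choose d)"
      and ds': "ds' \<in> set (dsL (b - d) (map (allow a) xs))"
      by (auto simp: allow_def dsL_Cons split: if_splits)
    have "b - d \<le> a" using Cons.prems by simp
    from ds' Cons.IH[OF this] d show "ds \<in> {ds. length ds = length (x # xs) \<and> sum_list ds = b \<and>
       (\<forall>i<length (x # xs). odd ((x # xs) ! i choose ds ! i))}"
      unfolding ds by (auto simp: nth_Cons split: nat.splits)
  next
    fix ds assume "ds \<in> {ds. length ds = length (x # xs) \<and> sum_list ds = b \<and>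
       (\<forall>i<length (x # xs). odd ((x # xs) ! i choose ds ! i))}"
    then obtain d ds' where ds: "ds = d # ds'" and l: "length ds' = length xs"
      and s: "d + sum_list ds' = b" and o: "\<forall>i<Suc (length xs). odd ((x # xs) ! i choose (d#ds') ! i)"
      by (cases ds) auto
    have od: "odd (x choose d)" using spec[OF o, of 0] by simp
    have o': "\<forall>i<length xs. odd (xs ! i choose ds' ! i)" using o by auto
    have db: "d \<le> b" "b - d \<le> a" using s Cons.prems by auto
    have "ds' \<in> set (dsL (b - d) (map (allow a) xs))"
      using Cons.IH[OF db(2)] l s o' by auto
    moreover have "d \<in> set (allow a x)" using od db Cons.prems by (simp add: allow_def del: upt_Suc)
    ultimately show "ds \<in> set (dsL b (map (allow a) (x # xs)))"
      unfolding ds using db by (auto simp: dsL_Cons intro!: bexI[of _ d])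
  qed
qed

definition sqL :: "nat \<Rightarrow> nat list \<Rightarrow> nat list list" where
  "sqL a xs = map (map2 (+) xs) (dsL a (map (allow a) xs))"

lemma sq_mono_sqL: "length xs = k \<Longrightarrow> sq_mono k a (tm xs) = tm ` set (sqL a xs)"
  unfolding sq_mono_tm sqL_def using set_dsL[of a a xs] by auto

lemma sqL_len: "m \<in> set (sqL a xs) \<Longrightarrow> length m = length xs"
  unfolding sqL_def using set_dsL[of a a xs] by auto




definition xorl :: "'a list \<Rightarrow> 'a list \<Rightarrow> 'a list" where
  "xorl xs ys = filter (\<lambda>x. x \<notin> set ys) xs @ filter (\<lambda>y. y \<notin> set xs) ys"

lemma set_xorl: "set (xorl xs ys) = (set xs - set ys) \<union> (set ys - set xs)"
  by (auto simp: xorl_def)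

definition gens :: "(nat \<times> nat list) list \<Rightarrow> nat list list list" where
  "gens cert = map (\<lambda>(i,g). sqL i g) cert"

definition okc :: "(nat \<times> nat list) list \<Rightarrow> bool" where
  "okc cert = list_all (\<lambda>(i,g). 1 \<le> i \<and> i \<le> 8 \<and> length g = 5) cert"

lemma xor_len: "okc cert \<Longrightarrow> m \<in> set (foldr xorl (gens cert) []) \<Longrightarrow> length m = 5"
proof (induction cert)
  case Nil then show ?case by (simp add: gens_def)
next
  case (Cons c cert)
  obtain i g where c: "c = (i,g)" by (cases c)
  show ?case using Cons.prems Cons.IH sqL_len[of m i g]
    by (auto simp: c gens_def okc_def set_xorl)
qed

lemma padd_image:
  assumes "A \<subseteq> {xs. length xs = 5}" "B \<subseteq> {xs. length xs = 5}"
  shows "padd (tm ` A) (tm ` B) = tm ` ((A - B) \<union> (B - A))"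
proof -
  have inj: "inj_on tm (A \<union> B)" using inj_on_subset[OF inj_tm[of 5]] assms by blast
  show ?thesis unfolding padd_def
    using inj by (auto simp: inj_on_def)
qed

lemma hit: "okc cert \<Longrightarrow> tm ` set (foldr xorl (gens cert) []) \<in> hitsp 5 3"
proof (induction cert)
  case Nil then show ?case by (simp add: hitsp.zero gens_def)
next
  case (Cons c cert)
  obtain i g where c: "c = (i,g)" by (cases c)
  have i: "1 \<le> i" "i \<le> 2^3" and lg: "length g = 5" and ok: "okc cert"
    using Cons.prems by (auto simp: c okc_def)
  have "tm ` set (sqL i g) = Sq 5 i {tm g}" using sq_mono_sqL[OF lg] Sq_single by simp
  moreover have "{tm g} \<in> polys 5" using is_mono_tm[of g 5] lg by (simp add: polys_def)
  ultimately have h1: "tm ` set (sqL i g) \<in> hitsp 5 3" using hitsp.gen i by metis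
  have h2: "tm ` set (foldr xorl (gens cert) []) \<in> hitsp 5 3" using Cons.IH ok .
  have "tm ` set (foldr xorl (gens (c # cert)) []) =
      padd (tm ` set (sqL i g)) (tm ` set (foldr xorl (gens cert) []))"
    using padd_image[of "set (sqL i g)" "set (foldr xorl (gens cert) [])"]
      sqL_len[of _ i g] lg xor_len[OF ok]
    by (auto simp: c gens_def set_xorl)
  then show ?case using hitsp.add[OF h1 h2] by simp
qed

lemma filter_xor: "set (filter P (foldr xorl Ls [])) = set (foldr xorl (map (filter P) Ls) [])"
  by (induction Ls) (auto simp: set_xorl)

fun lexl :: "nat list \<Rightarrow> nat list \<Rightarrow> bool" where
  "lexl (x # xs) (y # ys) = (x < y \<or> (x = y \<and> lexl xs ys))"
| "lexl _ _ = False"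

definition omL :: "nat list \<Rightarrow> nat list" where
  "omL xs = map (\<lambda>b. sum_list (map (\<lambda>e. e div 2^b mod 2) xs)) [0..<6]"

definition lessL :: "nat list \<Rightarrow> nat list \<Rightarrow> nat list \<Rightarrow> bool" where
  "lessL ou u m = (list_all (\<lambda>e. e < 64) m \<and> length m = length u \<and> sum_list m = sum_list u \<and>
     (let om = omL m in lexl om ou \<or> (om = ou \<and> lexl m u)))"

lemma lexless_unfold:
  "lexless a b \<longleftrightarrow> a 0 < b 0 \<or> (a 0 = b 0 \<and> lexless (\<lambda>i. a (Suc i)) (\<lambda>i. b (Suc i)))"
proof
  assume "lexless a b"
  then obtain i where h: "\<forall>j<i. a j = b j" "a i < b i" by (auto simp: lexless_def)
  show "a 0 < b 0 \<or> (a 0 = b 0 \<and> lexless (\<lambda>i. a (Suc i)) (\<lambda>i. b (Suc i)))"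
  proof (cases i)
    case 0 then show ?thesis using h by simp
  next
    case (Suc i') then show ?thesis using h unfolding lexless_def
      by (intro disjI2 conjI) (auto intro!: exI[of _ i'])
  qed
next
  assume "a 0 < b 0 \<or> (a 0 = b 0 \<and> lexless (\<lambda>i. a (Suc i)) (\<lambda>i. b (Suc i)))"
  then show "lexless a b"
  proof
    assume "a 0 < b 0" then show ?thesis unfolding lexless_def by (auto intro!: exI[of _ 0])
  next
    assume "a 0 = b 0 \<and> lexless (\<lambda>i. a (Suc i)) (\<lambda>i. b (Suc i))"
    then obtain i where h: "a 0 = b 0" "\<forall>j<i. a (Suc j) = b (Suc j)" "a (Suc i) < b (Suc i)"
      by (auto simp: lexless_def)
    have "\<forall>j<Suc i. a j = b j" using h by (auto simp: less_Suc_eq_0_disj)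
    then show ?thesis using h unfolding lexless_def by blast
  qed
qed

definition tz :: "nat list \<Rightarrow> nat \<Rightarrow> nat" where
  "tz xs i = (if i < length xs then xs ! i else 0)"

lemma lexless_tz: "length xs = length ys \<Longrightarrow> lexless (tz xs) (tz ys) = lexl xs ys"
proof (induction xs arbitrary: ys)
  case Nil then show ?case by (auto simp: lexless_def tz_def)
next
  case (Cons x xs)
  then obtain y ys' where ys: "ys = y # ys'" by (cases ys) auto
  have e1: "(\<lambda>i. tz (x#xs) (Suc i)) = tz xs" "(\<lambda>i. tz (y#ys') (Suc i)) = tz ys'"
    by (auto simp: tz_def)
  show ?case using Cons ys by (subst lexless_unfold) (simp add: e1, simp add: tz_def)
qed

lemma tm_tz: "tm xs = (\<lambda>n. case n of 0 \<Rightarrow> 0 | Suc i \<Rightarrow> tz xs i)"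
  by (auto simp: tm_def tz_def fun_eq_iff split: nat.splits)

lemma lexless_tm: "length xs = length ys \<Longrightarrow> lexless (tm xs) (tm ys) = lexl xs ys"
  by (subst lexless_unfold) (simp add: tm_tz lexless_tz)

lemma sum_tm_f: "length ds = k \<Longrightarrow> (\<Sum>n\<in>{1..k}. (f::nat\<Rightarrow>nat) (tm ds n)) = sum_list (map f ds)"
proof -
  assume l: "length ds = k"
  have "\<And>g::nat\<Rightarrow>nat. (\<Sum>n\<in>{1..k}. g n) = (\<Sum>i<k. g (Suc i))"
    by (induction k) (auto simp: atLeastAtMostSuc_conv)
  then have "(\<Sum>n\<in>{1..k}. f (tm ds n)) = (\<Sum>i<k. f (tm ds (Suc i)))" .
  also have "\<dots> = (\<Sum>i<k. f (ds ! i))" using l by (intro sum.cong) (auto simp: tm_def)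
  also have "\<dots> = sum_list (map f ds)" using l by (simp add: sum_list_sum_nth atLeast0LessThan)
  finally show ?thesis .
qed

lemma omega_tm:
  assumes lm: "length m = 5" and m64: "list_all (\<lambda>e. e < 64) m"
  shows "omega 5 (tm m) = tm (omL m)"
proof
  fix n
  show "omega 5 (tm m) n = tm (omL m) n"
  proof (cases "n = 0")
    case True then show ?thesis by (simp add: omega_def tm_def)
  next
    case False
    have o: "omega 5 (tm m) n = sum_list (map (\<lambda>e. e div 2^(n-1) mod 2) m)"
      using False sum_tm_f[OF lm, of "\<lambda>e. e div 2^(n-1) mod 2"] by (simp add: omega_def)
    show ?thesis
    proof (cases "n \<le> 6")
      case True
      have "[0..<6] ! (n - 1) = n - 1" using True False by (simp del: upt_Suc)
      then show ?thesis using False True by (simp add: o tm_def omL_def del: upt_Suc)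
    next
      case nle: False
      have p: "64 \<le> (2::nat) ^ (n - 1)"
      proof -
        have "(2::nat)^6 \<le> 2^(n-1)" by (rule power_increasing) (use nle in auto)
        then show ?thesis by simp
      qed
      have "\<forall>x\<in>set m. x div 2^(n-1) mod 2 = 0" using m64 p by (auto simp: list_all_iff)
      then have "sum_list (map (\<lambda>e. e div 2^(n-1) mod 2) m) = 0"
        by (induction m) auto
      then show ?thesis using nle False by (simp add: o tm_def omL_def)
    qed
  qed
qed

lemma deg_tm: "length m = k \<Longrightarrow> deg k (tm m) = sum_list m"
  unfolding deg_def by (rule sum_tm)

lemma lessL_sound:
  assumes "lessL (omL u) u m" "length u = 5" "list_all (\<lambda>e. e < 64) u"
  shows "mono_less 5 (tm m) (tm u)"
proof -
  have lm: "length m = 5" and m64: "list_all (\<lambda>e. e < 64) m" using assms by (auto simp: lessL_def)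
  have lo: "length (omL x) = 6" for x by (simp add: omL_def)
  have ti: "tm (omL m) = tm (omL u) \<longleftrightarrow> omL m = omL u" using tm_inj lo by metis
  show ?thesis using assms(1) unfolding mono_less_def lessL_def Let_def
    by (simp add: deg_tm lm assms(2) omega_tm[OF lm m64] omega_tm[OF assms(2) assms(3)]
        lexless_tm lo ti)
qed




definition chk :: "nat list \<Rightarrow> nat list \<Rightarrow> (nat \<times> nat list) list \<Rightarrow> bool" where
  "chk u ou cert = (length u = 5 \<and> list_all (\<lambda>e. e < 64) u \<and> okc cert \<and> ou = omL u \<and>
      ou ! 3 \<noteq> 0 \<and> ou ! 4 = 0 \<and> ou ! 5 = 0 \<and>
      foldr xorl (map (filter (\<lambda>m. \<not> lessL ou u m)) (gens cert)) [] = [u])"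

lemma Max_S:
  assumes "length ou = 6" "ou ! 3 \<noteq> 0" "ou ! 4 = 0" "ou ! 5 = 0"
  shows "Max {i. 1 \<le> i \<and> 0 < tm ou i} = 4"
proof (rule Max_eqI)
  show "finite {i. 1 \<le> i \<and> 0 < tm ou i}"
    by (rule finite_subset[of _ "{..6}"]) (use assms(1) in \<open>auto simp: tm_def split: if_splits\<close>)
  show "4 \<in> {i. 1 \<le> i \<and> 0 < tm ou i}" using assms by (simp add: tm_def)
  fix y assume "y \<in> {i. 1 \<le> i \<and> 0 < tm ou i}"
  then have "1 \<le> y" "y \<le> 6" "0 < ou ! (y - 1)" using assms(1) by (auto simp: tm_def split: if_splits)
  then show "y \<le> 4" using assms(3,4)
    by (cases "y = 5"; cases "y = 6"; auto)
qed

lemma crit: assumes c: "chk u ou cert" shows "strictly_inadmissible 5 (tm u)"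
proof -
  have lu: "length u = 5" and u64: "list_all (\<lambda>e. e < 64) u" and ok: "okc cert"
    and ou: "ou = omL u" and o3: "ou ! 3 \<noteq> 0" "ou ! 4 = 0" "ou ! 5 = 0"
    and fx: "foldr xorl (map (filter (\<lambda>m. \<not> lessL ou u m)) (gens cert)) [] = [u]"
    using c by (auto simp: chk_def)
  define X where "X = foldr xorl (gens cert) []"
  have H: "tm ` set X \<in> hitsp 5 3" unfolding X_def by (rule hit[OF ok])
  have lX: "\<And>m. m \<in> set X \<Longrightarrow> length m = 5" unfolding X_def by (rule xor_len[OF ok])
  have sf: "set (filter (\<lambda>m. \<not> lessL ou u m) X) = {u}"
    using filter_xor[of "\<lambda>m. \<not> lessL ou u m" "gens cert"] fx unfolding X_def by simp
  then have uX: "u \<in> set X" by auto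
  have lessX: "\<And>m. m \<in> set X \<Longrightarrow> m \<noteq> u \<Longrightarrow> lessL ou u m" using sf by auto
  define V where "V = tm ` (set X - {u})"
  have fV: "finite V" by (simp add: V_def)
  have Vok: "\<forall>v\<in>V. is_mono 5 v \<and> mono_less 5 v (tm u)"
  proof
    fix v assume "v \<in> V"
    then obtain m where m: "v = tm m" "m \<in> set X" "m \<noteq> u" by (auto simp: V_def)
    have "is_mono 5 v" using lX[OF m(2)] is_mono_tm m(1) by simp
    moreover have "mono_less 5 v (tm u)" using lessL_sound[of u m] lessX[OF m(2,3)] ou lu u64 m(1)
      by simp
    ultimately show "is_mono 5 v \<and> mono_less 5 v (tm u)" ..
  qed
  have uV: "tm u \<notin> V"
  proof
    assume "tm u \<in> V"
    then obtain m where "tm u = tm m" "m \<in> set X" "m \<noteq> u" by (auto simp: V_def)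
    then show False using tm_inj[of u m] lX lu by auto
  qed
  have "padd {tm u} V = tm ` set X"
    using uV uX by (auto simp: padd_def V_def)
  with H have hp: "padd {tm u} V \<in> hitsp 5 3" by simp
  have lo: "length ou = 6" using ou by (simp add: omL_def)
  have "{i. 1 \<le> i \<and> 0 < omega 5 (tm u) i} = {i. 1 \<le> i \<and> 0 < tm ou i}"
    using omega_tm[OF lu u64] ou by simp
  then have mx: "Max {i. 1 \<le> i \<and> 0 < omega 5 (tm u) i} = 4" using Max_S[OF lo o3] by simp
  show ?thesis unfolding strictly_inadmissible_def Let_def mx
    using is_mono_tm[of u 5] lu fV Vok hp by auto
qed




fun bn :: "nat \<Rightarrow> nat \<Rightarrow> nat" where
  "bn n k = (if k = 0 then 1 else bn n (k - 1) * (n - (k - 1)) div k)"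

declare bn.simps[simp del]

lemma bn_eq: "bn n k = n choose k"
proof (induction k)
  case 0 then show ?case by (simp add: bn.simps)
next
  case (Suc k)
  have "Suc k * (n choose Suc k) = (n - k) * (n choose k)"
    using binomial_absorption[of k n] binomial_absorb_comp[of n k] by simp
  then have "n choose Suc k = (n choose k) * (n - k) div Suc k"
    by (metis mult.commute nonzero_mult_div_cancel_left nat.simps(3))
  then show ?case using Suc by (simp add: bn.simps)
qed

function allowR :: "nat \<Rightarrow> nat \<Rightarrow> nat \<Rightarrow> nat list" where
  "allowR x d a = (if a < d then [] else if odd (bn x d) then d # allowR x (d + 1) a else allowR x (d + 1) a)"
  by pat_completeness auto
termination by (relation "measure (\<lambda>(x,d,a). Suc a - d)") auto

declare allowR.simps[simp del]

lemma allowR_eq: "allowR x d a = filter (\<lambda>e. odd (x choose e)) [d..<Suc a]"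
proof (induction x d a rule: allowR.induct)
  case (1 x d a)
  show ?case
  proof (cases "a < d")
    case True then show ?thesis by (simp add: allowR.simps)
  next
    case False
    then have "[d..<Suc a] = d # [Suc d..<Suc a]" by (simp add: upt_conv_Cons)
    then show ?thesis using 1 False by (simp add: allowR.simps bn_eq)
  qed
qed

fun mapallow :: "nat \<Rightarrow> nat list \<Rightarrow> nat list list" where
  "mapallow a [] = []"
| "mapallow a (x # xs) = allowR x 0 a # mapallow a xs"

lemma mapallow_eq: "mapallow a xs = map (allow a) xs"
  by (induction xs) (simp_all add: allow_def allowR_eq)

fun madd :: "nat list \<Rightarrow> nat list list \<Rightarrow> nat list list" where
  "madd xs [] = []"
| "madd xs (d # ds) = map2 (+) xs d # madd xs ds"

lemma madd_eq: "madd xs ds = map (map2 (+) xs) ds"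
  by (induction ds) auto

definition sqR :: "nat \<Rightarrow> nat list \<Rightarrow> nat list list" where
  "sqR a xs = madd xs (dsL a (mapallow a xs))"

lemma sqR_eq: "sqR a xs = sqL a xs"
  by (simp add: sqR_def sqL_def madd_eq mapallow_eq)

fun filt :: "nat list \<Rightarrow> nat list \<Rightarrow> nat list list \<Rightarrow> nat list list" where
  "filt ou u [] = []"
| "filt ou u (m # ms) = (if lessL ou u m then filt ou u ms else m # filt ou u ms)"

lemma filt_eq: "filt ou u ms = filter (\<lambda>m. \<not> lessL ou u m) ms"
  by (induction ms) auto

fun fgens :: "nat list \<Rightarrow> nat list \<Rightarrow> (nat \<times> nat list) list \<Rightarrow> nat list list list" where
  "fgens ou u [] = []"
| "fgens ou u ((i, g) # c) = filt ou u (sqR i g) # fgens ou u c"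

lemma fgens_eq: "fgens ou u cert = map (filter (\<lambda>m. \<not> lessL ou u m)) (gens cert)"
  by (induction ou u cert rule: fgens.induct) (simp_all add: gens_def filt_eq sqR_eq)

fun rmv :: "nat list list \<Rightarrow> nat list list \<Rightarrow> nat list list" where
  "rmv ys [] = []"
| "rmv ys (x # xs) = (if x \<in> set ys then rmv ys xs else x # rmv ys xs)"

lemma rmv_eq: "rmv ys xs = filter (\<lambda>x. x \<notin> set ys) xs"
  by (induction xs) auto

fun xfold :: "nat list list list \<Rightarrow> nat list list" where
  "xfold [] = []"
| "xfold (L # Ls) = (let R = xfold Ls in rmv R L @ rmv L R)"

lemma xfold_eq: "xfold Ls = foldr xorl Ls []"
  by (induction Ls) (simp_all add: xorl_def rmv_eq Let_def)

definition chk2 :: "nat list \<Rightarrow> nat list \<Rightarrow> (nat \<times> nat list) list \<Rightarrow> bool" where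
  "chk2 u ou cert = (length u = 5 \<and> list_all (\<lambda>e. e < 64) u \<and> okc cert \<and> ou = omL u \<and>
      ou ! 3 \<noteq> 0 \<and> ou ! 4 = 0 \<and> ou ! 5 = 0 \<and> xfold (fgens ou u cert) = [u])"

lemma crit2: assumes "chk2 u ou cert" shows "strictly_inadmissible 5 (tm u)"
proof -
  have "chk u ou cert" using assms unfolding chk2_def chk_def xfold_eq fgens_eq by blast
  then show ?thesis by (rule crit)
qed

lemma upt6: "[0..<6] = [0::nat,1,2,3,4,5]" by (simp add: upt_rec)

lemma omL_eval: "omL xs = map (\<lambda>b. sum_list (map (\<lambda>e. e div 2^b mod 2) xs)) [0,1,2,3,4,5]"
  by (simp only: omL_def upt6)

lemmas ev = bn.simps allowR.simps sqR_def dsL.simps dsH.simps chk2_def lessL_def omL_eval okc_def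
  One_nat_def[symmetric]




lemma sum4: "(\<Sum>t\<in>{1..4::nat}. f t) = f 1 + f 2 + f 3 + (f 4 :: nat)"
  by (simp add: numeral_eq_Suc atLeastAtMostSuc_conv)

lemma theta_eval: "theta r w n = (if Jr r 1 = n then w 1 else 0) + (if Jr r 2 = n then w 2 else 0)
   + (if Jr r 3 = n then w 3 else 0) + (if Jr r 4 = n then w 4 else 0)"
  unfolding theta_def sum.inter_filter[OF finite_atLeastAtMost] sum4 by simp

lemma fun_tm: assumes "f 0 = 0" "\<forall>n>5. f n = (0::nat)" shows "f = tm (map f [1,2,3,4,5])"
proof
  fix n show "f n = tm (map f [1,2,3,4,5]) n"
  proof (cases "n \<le> 5")
    case True
    then have "n = 0 \<or> n = 1 \<or> n = 2 \<or> n = 3 \<or> n = 4 \<or> n = 5" by auto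
    then show ?thesis using assms by (auto simp: tm_def)
  next
    case False then show ?thesis using assms by (simp add: tm_def)
  qed
qed

lemma si_fun: "strictly_inadmissible 5 (tm u) \<Longrightarrow> f 0 = 0 \<Longrightarrow> (\<forall>n>5. f n = 0) \<Longrightarrow>
   map f [1,2,3,4,5] = u \<Longrightarrow> strictly_inadmissible 5 f"
  using fun_tm[of f] by metis

lemma "strictly_inadmissible 5 (tm [7,9,2,15,15]) \<Longrightarrow> strictly_inadmissible 5 (mon [(1,7),(2,9),(3,2),(4,15),(5,15)])"
  by (erule si_fun) (simp_all add: mon_def)

lemma "strictly_inadmissible 5 (tm [7,15,9,2,15]) \<Longrightarrow> strictly_inadmissible 5 (mmul (mon [(2,15)]) (theta 2 (mon [(1,7),(2,9),(3,2),(4,15)])))"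
  by (erule si_fun) (simp_all add: mon_def mmul_def theta_eval Jr_def)


lemma key: assumes "{i, j, t, u, v} = {1..5::nat}" "i < j" "j < t"
  shows "(i,j,t,u,v) \<in> set [(1,2,3,4,5),(1,2,3,5,4),(1,2,4,3,5),(1,2,4,5,3),(1,2,5,3,4),(1,2,5,4,3),
     (1,3,4,2,5),(1,3,4,5,2),(1,3,5,2,4),(1,3,5,4,2),(1,4,5,2,3),(1,4,5,3,2),
     (2,3,4,1,5),(2,3,4,5,1),(2,3,5,1,4),(2,3,5,4,1),(2,4,5,1,3),(2,4,5,3,1),(3,4,5,1,2),(3,4,5,2,1)]"
proof -
  have ii: "i \<in> {1..5}" "t \<in> {1..5}" by (simp_all only: assms(1)[symmetric] insert_iff; simp)+
  have c1: "1 \<in> {i, j, t, u, v}" and c2: "2 \<in> {i, j, t, u, v}" and c3: "3 \<in> {i, j, t, u, v}"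
    and c4: "4 \<in> {i, j, t, u, v}" and c5: "5 \<in> {i, j, t, u, v}" by (simp_all add: assms(1))
  have "i = 1 \<and> j = 2 \<and> t = 3 \<or> i = 1 \<and> j = 2 \<and> t = 4 \<or> i = 1 \<and> j = 2 \<and> t = 5 \<or>
        i = 1 \<and> j = 3 \<and> t = 4 \<or> i = 1 \<and> j = 3 \<and> t = 5 \<or> i = 1 \<and> j = 4 \<and> t = 5 \<or>
        i = 2 \<and> j = 3 \<and> t = 4 \<or> i = 2 \<and> j = 3 \<and> t = 5 \<or> i = 2 \<and> j = 4 \<and> t = 5 \<or>
        i = 3 \<and> j = 4 \<and> t = 5" using ii assms(2,3) by (simp only: atLeastAtMost_iff) presburger
  then show ?thesis using c1 c2 c3 c4 c5
    by (elim disjE conjE; auto)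
qed

lemma s0: "strictly_inadmissible 5 (tm [7, 9, 2, 15, 15])"
  by (rule crit2[of _ "[4, 4, 3, 3, 0, 0]" "[(1, [5, 7, 5, 15, 15]), (1, [7, 7, 3, 15, 15]), (2, [3, 7, 6, 15, 15]), (2, [6, 7, 3, 15, 15]), (2, [7, 7, 2, 15, 15]), (4, [5, 7, 2, 15, 15])]"]) (simp del: One_nat_def add: ev)

lemma s1: "strictly_inadmissible 5 (tm [3, 7, 8, 15, 15])"
  by (rule crit2[of _ "[4, 4, 3, 3, 0, 0]" "[(1, [3, 7, 7, 15, 15]), (2, [2, 7, 7, 15, 15]), (4, [3, 4, 7, 15, 15])]"]) (simp del: One_nat_def add: ev)

lemma s2: "strictly_inadmissible 5 (tm [7, 3, 8, 15, 15])"
  by (rule crit2[of _ "[4, 4, 3, 3, 0, 0]" "[(1, [5, 5, 7, 15, 15]), (1, [7, 3, 7, 15, 15]), (2, [3, 6, 7, 15, 15]), (2, [6, 3, 7, 15, 15]), (2, [7, 2, 7, 15, 15]), (4, [5, 2, 7, 15, 15])]"]) (simp del: One_nat_def add: ev)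

lemma s3: "strictly_inadmissible 5 (tm [7, 8, 3, 15, 15])"
  by (rule crit2[of _ "[4, 4, 3, 3, 0, 0]" "[(1, [7, 5, 5, 15, 15]), (2, [7, 3, 6, 15, 15]), (2, [7, 6, 3, 15, 15]), (4, [5, 3, 6, 15, 15]), (4, [5, 6, 3, 15, 15])]"]) (simp del: One_nat_def add: ev)

lemma s4: "strictly_inadmissible 5 (tm [7, 9, 15, 2, 15])"
  by (rule crit2[of _ "[4, 4, 3, 3, 0, 0]" "[(1, [5, 7, 15, 5, 15]), (1, [7, 7, 15, 3, 15]), (2, [3, 7, 15, 6, 15]), (2, [6, 7, 15, 3, 15]), (2, [7, 7, 15, 2, 15]), (4, [5, 7, 15, 2, 15])]"]) (simp del: One_nat_def add: ev)

lemma s5: "strictly_inadmissible 5 (tm [3, 7, 15, 8, 15])"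
  by (rule crit2[of _ "[4, 4, 3, 3, 0, 0]" "[(1, [3, 7, 15, 7, 15]), (2, [2, 7, 15, 7, 15]), (4, [3, 4, 15, 7, 15])]"]) (simp del: One_nat_def add: ev)

lemma s6: "strictly_inadmissible 5 (tm [7, 3, 15, 8, 15])"
  by (rule crit2[of _ "[4, 4, 3, 3, 0, 0]" "[(1, [5, 5, 15, 7, 15]), (1, [7, 3, 15, 7, 15]), (2, [3, 6, 15, 7, 15]), (2, [6, 3, 15, 7, 15]), (2, [7, 2, 15, 7, 15]), (4, [5, 2, 15, 7, 15])]"]) (simp del: One_nat_def add: ev)

lemma s7: "strictly_inadmissible 5 (tm [7, 8, 15, 3, 15])"
  by (rule crit2[of _ "[4, 4, 3, 3, 0, 0]" "[(1, [7, 5, 15, 5, 15]), (2, [7, 3, 15, 6, 15]), (2, [7, 6, 15, 3, 15]), (4, [5, 3, 15, 6, 15]), (4, [5, 6, 15, 3, 15])]"]) (simp del: One_nat_def add: ev)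

lemma s8: "strictly_inadmissible 5 (tm [7, 9, 15, 15, 2])"
  by (rule crit2[of _ "[4, 4, 3, 3, 0, 0]" "[(1, [5, 7, 15, 15, 5]), (1, [7, 7, 15, 15, 3]), (2, [3, 7, 15, 15, 6]), (2, [6, 7, 15, 15, 3]), (2, [7, 7, 15, 15, 2]), (4, [5, 7, 15, 15, 2])]"]) (simp del: One_nat_def add: ev)

lemma s9: "strictly_inadmissible 5 (tm [3, 7, 15, 15, 8])"
  by (rule crit2[of _ "[4, 4, 3, 3, 0, 0]" "[(1, [3, 7, 15, 15, 7]), (2, [2, 7, 15, 15, 7]), (4, [3, 4, 15, 15, 7])]"]) (simp del: One_nat_def add: ev)

lemma s10: "strictly_inadmissible 5 (tm [7, 3, 15, 15, 8])"
  by (rule crit2[of _ "[4, 4, 3, 3, 0, 0]" "[(1, [5, 5, 15, 15, 7]), (1, [7, 3, 15, 15, 7]), (2, [3, 6, 15, 15, 7]), (2, [6, 3, 15, 15, 7]), (2, [7, 2, 15, 15, 7]), (4, [5, 2, 15, 15, 7])]"]) (simp del: One_nat_def add: ev)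

lemma s11: "strictly_inadmissible 5 (tm [7, 8, 15, 15, 3])"
  by (rule crit2[of _ "[4, 4, 3, 3, 0, 0]" "[(1, [7, 5, 15, 15, 5]), (2, [7, 3, 15, 15, 6]), (2, [7, 6, 15, 15, 3]), (4, [5, 3, 15, 15, 6]), (4, [5, 6, 15, 15, 3])]"]) (simp del: One_nat_def add: ev)

lemma s12: "strictly_inadmissible 5 (tm [7, 15, 9, 2, 15])"
  by (rule crit2[of _ "[4, 4, 3, 3, 0, 0]" "[(1, [5, 15, 7, 5, 15]), (1, [7, 15, 7, 3, 15]), (2, [3, 15, 7, 6, 15]), (2, [6, 15, 7, 3, 15]), (2, [7, 15, 7, 2, 15]), (4, [5, 15, 7, 2, 15])]"]) (simp del: One_nat_def add: ev)

lemma s13: "strictly_inadmissible 5 (tm [3, 15, 7, 8, 15])"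
  by (rule crit2[of _ "[4, 4, 3, 3, 0, 0]" "[(1, [3, 15, 7, 7, 15]), (2, [2, 15, 7, 7, 15]), (4, [3, 15, 4, 7, 15])]"]) (simp del: One_nat_def add: ev)

lemma s14: "strictly_inadmissible 5 (tm [7, 15, 3, 8, 15])"
  by (rule crit2[of _ "[4, 4, 3, 3, 0, 0]" "[(1, [5, 15, 5, 7, 15]), (1, [7, 15, 3, 7, 15]), (2, [3, 15, 6, 7, 15]), (2, [6, 15, 3, 7, 15]), (2, [7, 15, 2, 7, 15]), (4, [5, 15, 2, 7, 15])]"]) (simp del: One_nat_def add: ev)

lemma s15: "strictly_inadmissible 5 (tm [7, 15, 8, 3, 15])"
  by (rule crit2[of _ "[4, 4, 3, 3, 0, 0]" "[(1, [7, 15, 5, 5, 15]), (2, [7, 15, 3, 6, 15]), (2, [7, 15, 6, 3, 15]), (4, [5, 15, 3, 6, 15]), (4, [5, 15, 6, 3, 15])]"]) (simp del: One_nat_def add: ev)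

lemma s16: "strictly_inadmissible 5 (tm [7, 15, 9, 15, 2])"
  by (rule crit2[of _ "[4, 4, 3, 3, 0, 0]" "[(1, [5, 15, 7, 15, 5]), (1, [7, 15, 7, 15, 3]), (2, [3, 15, 7, 15, 6]), (2, [6, 15, 7, 15, 3]), (2, [7, 15, 7, 15, 2]), (4, [5, 15, 7, 15, 2])]"]) (simp del: One_nat_def add: ev)

lemma s17: "strictly_inadmissible 5 (tm [3, 15, 7, 15, 8])"
  by (rule crit2[of _ "[4, 4, 3, 3, 0, 0]" "[(1, [3, 15, 7, 15, 7]), (2, [2, 15, 7, 15, 7]), (4, [3, 15, 4, 15, 7])]"]) (simp del: One_nat_def add: ev)

lemma s18: "strictly_inadmissible 5 (tm [7, 15, 3, 15, 8])"
  by (rule crit2[of _ "[4, 4, 3, 3, 0, 0]" "[(1, [5, 15, 5, 15, 7]), (1, [7, 15, 3, 15, 7]), (2, [3, 15, 6, 15, 7]), (2, [6, 15, 3, 15, 7]), (2, [7, 15, 2, 15, 7]), (4, [5, 15, 2, 15, 7])]"]) (simp del: One_nat_def add: ev)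

lemma s19: "strictly_inadmissible 5 (tm [7, 15, 8, 15, 3])"
  by (rule crit2[of _ "[4, 4, 3, 3, 0, 0]" "[(1, [7, 15, 5, 15, 5]), (2, [7, 15, 3, 15, 6]), (2, [7, 15, 6, 15, 3]), (4, [5, 15, 3, 15, 6]), (4, [5, 15, 6, 15, 3])]"]) (simp del: One_nat_def add: ev)

lemma s20: "strictly_inadmissible 5 (tm [7, 15, 15, 9, 2])"
  by (rule crit2[of _ "[4, 4, 3, 3, 0, 0]" "[(1, [5, 15, 15, 7, 5]), (1, [7, 15, 15, 7, 3]), (2, [3, 15, 15, 7, 6]), (2, [6, 15, 15, 7, 3]), (2, [7, 15, 15, 7, 2]), (4, [5, 15, 15, 7, 2])]"]) (simp del: One_nat_def add: ev)

lemma s21: "strictly_inadmissible 5 (tm [3, 15, 15, 7, 8])"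
  by (rule crit2[of _ "[4, 4, 3, 3, 0, 0]" "[(1, [3, 15, 15, 7, 7]), (2, [2, 15, 15, 7, 7]), (4, [3, 15, 15, 4, 7])]"]) (simp del: One_nat_def add: ev)

lemma s22: "strictly_inadmissible 5 (tm [7, 15, 15, 3, 8])"
  by (rule crit2[of _ "[4, 4, 3, 3, 0, 0]" "[(1, [5, 15, 15, 5, 7]), (1, [7, 15, 15, 3, 7]), (2, [3, 15, 15, 6, 7]), (2, [6, 15, 15, 3, 7]), (2, [7, 15, 15, 2, 7]), (4, [5, 15, 15, 2, 7])]"]) (simp del: One_nat_def add: ev)

lemma s23: "strictly_inadmissible 5 (tm [7, 15, 15, 8, 3])"
  by (rule crit2[of _ "[4, 4, 3, 3, 0, 0]" "[(1, [7, 15, 15, 5, 5]), (2, [7, 15, 15, 3, 6]), (2, [7, 15, 15, 6, 3]), (4, [5, 15, 15, 3, 6]), (4, [5, 15, 15, 6, 3])]"]) (simp del: One_nat_def add: ev)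

lemma s24: "strictly_inadmissible 5 (tm [15, 7, 9, 2, 15])"
  by (rule crit2[of _ "[4, 4, 3, 3, 0, 0]" "[(1, [15, 5, 7, 5, 15]), (1, [15, 7, 7, 3, 15]), (2, [15, 3, 7, 6, 15]), (2, [15, 6, 7, 3, 15]), (2, [15, 7, 7, 2, 15]), (4, [15, 5, 7, 2, 15])]"]) (simp del: One_nat_def add: ev)

lemma s25: "strictly_inadmissible 5 (tm [15, 3, 7, 8, 15])"
  by (rule crit2[of _ "[4, 4, 3, 3, 0, 0]" "[(1, [15, 3, 7, 7, 15]), (2, [15, 2, 7, 7, 15]), (4, [15, 3, 4, 7, 15])]"]) (simp del: One_nat_def add: ev)

lemma s26: "strictly_inadmissible 5 (tm [15, 7, 3, 8, 15])"
  by (rule crit2[of _ "[4, 4, 3, 3, 0, 0]" "[(1, [15, 5, 5, 7, 15]), (1, [15, 7, 3, 7, 15]), (2, [15, 3, 6, 7, 15]), (2, [15, 6, 3, 7, 15]), (2, [15, 7, 2, 7, 15]), (4, [15, 5, 2, 7, 15])]"]) (simp del: One_nat_def add: ev)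

lemma s27: "strictly_inadmissible 5 (tm [15, 7, 8, 3, 15])"
  by (rule crit2[of _ "[4, 4, 3, 3, 0, 0]" "[(1, [15, 7, 5, 5, 15]), (2, [15, 7, 3, 6, 15]), (2, [15, 7, 6, 3, 15]), (4, [15, 5, 3, 6, 15]), (4, [15, 5, 6, 3, 15])]"]) (simp del: One_nat_def add: ev)

lemma s28: "strictly_inadmissible 5 (tm [15, 7, 9, 15, 2])"
  by (rule crit2[of _ "[4, 4, 3, 3, 0, 0]" "[(1, [15, 5, 7, 15, 5]), (1, [15, 7, 7, 15, 3]), (2, [15, 3, 7, 15, 6]), (2, [15, 6, 7, 15, 3]), (2, [15, 7, 7, 15, 2]), (4, [15, 5, 7, 15, 2])]"]) (simp del: One_nat_def add: ev)

lemma s29: "strictly_inadmissible 5 (tm [15, 3, 7, 15, 8])"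
  by (rule crit2[of _ "[4, 4, 3, 3, 0, 0]" "[(1, [15, 3, 7, 15, 7]), (2, [15, 2, 7, 15, 7]), (4, [15, 3, 4, 15, 7])]"]) (simp del: One_nat_def add: ev)

lemma s30: "strictly_inadmissible 5 (tm [15, 7, 3, 15, 8])"
  by (rule crit2[of _ "[4, 4, 3, 3, 0, 0]" "[(1, [15, 5, 5, 15, 7]), (1, [15, 7, 3, 15, 7]), (2, [15, 3, 6, 15, 7]), (2, [15, 6, 3, 15, 7]), (2, [15, 7, 2, 15, 7]), (4, [15, 5, 2, 15, 7])]"]) (simp del: One_nat_def add: ev)

lemma s31: "strictly_inadmissible 5 (tm [15, 7, 8, 15, 3])"
  by (rule crit2[of _ "[4, 4, 3, 3, 0, 0]" "[(1, [15, 7, 5, 15, 5]), (2, [15, 7, 3, 15, 6]), (2, [15, 7, 6, 15, 3]), (4, [15, 5, 3, 15, 6]), (4, [15, 5, 6, 15, 3])]"]) (simp del: One_nat_def add: ev)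

lemma s32: "strictly_inadmissible 5 (tm [15, 7, 15, 9, 2])"
  by (rule crit2[of _ "[4, 4, 3, 3, 0, 0]" "[(1, [15, 5, 15, 7, 5]), (1, [15, 7, 15, 7, 3]), (2, [15, 3, 15, 7, 6]), (2, [15, 6, 15, 7, 3]), (2, [15, 7, 15, 7, 2]), (4, [15, 5, 15, 7, 2])]"]) (simp del: One_nat_def add: ev)

lemma s33: "strictly_inadmissible 5 (tm [15, 3, 15, 7, 8])"
  by (rule crit2[of _ "[4, 4, 3, 3, 0, 0]" "[(1, [15, 3, 15, 7, 7]), (2, [15, 2, 15, 7, 7]), (4, [15, 3, 15, 4, 7])]"]) (simp del: One_nat_def add: ev)

lemma s34: "strictly_inadmissible 5 (tm [15, 7, 15, 3, 8])"
  by (rule crit2[of _ "[4, 4, 3, 3, 0, 0]" "[(1, [15, 5, 15, 5, 7]), (1, [15, 7, 15, 3, 7]), (2, [15, 3, 15, 6, 7]), (2, [15, 6, 15, 3, 7]), (2, [15, 7, 15, 2, 7]), (4, [15, 5, 15, 2, 7])]"]) (simp del: One_nat_def add: ev)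

lemma s35: "strictly_inadmissible 5 (tm [15, 7, 15, 8, 3])"
  by (rule crit2[of _ "[4, 4, 3, 3, 0, 0]" "[(1, [15, 7, 15, 5, 5]), (2, [15, 7, 15, 3, 6]), (2, [15, 7, 15, 6, 3]), (4, [15, 5, 15, 3, 6]), (4, [15, 5, 15, 6, 3])]"]) (simp del: One_nat_def add: ev)

lemma s36: "strictly_inadmissible 5 (tm [15, 15, 7, 9, 2])"
  by (rule crit2[of _ "[4, 4, 3, 3, 0, 0]" "[(1, [15, 15, 5, 7, 5]), (1, [15, 15, 7, 7, 3]), (2, [15, 15, 3, 7, 6]), (2, [15, 15, 6, 7, 3]), (2, [15, 15, 7, 7, 2]), (4, [15, 15, 5, 7, 2])]"]) (simp del: One_nat_def add: ev)

lemma s37: "strictly_inadmissible 5 (tm [15, 15, 3, 7, 8])"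
  by (rule crit2[of _ "[4, 4, 3, 3, 0, 0]" "[(1, [15, 15, 3, 7, 7]), (2, [15, 15, 2, 7, 7]), (4, [15, 15, 3, 4, 7])]"]) (simp del: One_nat_def add: ev)

lemma s38: "strictly_inadmissible 5 (tm [15, 15, 7, 3, 8])"
  by (rule crit2[of _ "[4, 4, 3, 3, 0, 0]" "[(1, [15, 15, 5, 5, 7]), (1, [15, 15, 7, 3, 7]), (2, [15, 15, 3, 6, 7]), (2, [15, 15, 6, 3, 7]), (2, [15, 15, 7, 2, 7]), (4, [15, 15, 5, 2, 7])]"]) (simp del: One_nat_def add: ev)

lemma s39: "strictly_inadmissible 5 (tm [15, 15, 7, 8, 3])"
  by (rule crit2[of _ "[4, 4, 3, 3, 0, 0]" "[(1, [15, 15, 7, 5, 5]), (2, [15, 15, 7, 3, 6]), (2, [15, 15, 7, 6, 3]), (4, [15, 15, 5, 3, 6]), (4, [15, 15, 5, 6, 3])]"]) (simp del: One_nat_def add: ev)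

lemma s40: "strictly_inadmissible 5 (tm [15, 7, 8, 7, 11])"
  by (rule crit2[of _ "[4, 4, 3, 3, 0, 0]" "[(1, [15, 7, 5, 7, 13]), (2, [15, 7, 3, 7, 14]), (2, [15, 7, 6, 7, 11]), (4, [15, 5, 3, 7, 14]), (4, [15, 5, 6, 7, 11])]"]) (simp del: One_nat_def add: ev)

lemma s41: "strictly_inadmissible 5 (tm [15, 7, 9, 3, 14])"
  by (rule crit2[of _ "[4, 4, 3, 3, 0, 0]" "[(1, [15, 5, 7, 13, 7]), (1, [15, 7, 7, 5, 13]), (1, [15, 7, 7, 11, 7]), (1, [15, 11, 3, 5, 13]), (2, [15, 3, 7, 14, 7]), (2, [15, 6, 7, 11, 7]), (2, [15, 7, 7, 3, 14]), (2, [15, 7, 7, 6, 11]), (2, [15, 7, 7, 10, 7]), (2, [15, 11, 3, 6, 11]), (2, [15, 11, 3, 10, 7]), (4, [15, 5, 7, 3, 14]), (4, [15, 5, 7, 6, 11]), (4, [15, 5, 7, 10, 7]), (4, [15, 7, 3, 5, 14]), (4, [15, 7, 3, 12, 7]), (4, [15, 7, 5, 6, 11]), (4, [15, 7, 5, 10, 7]), (4, [15, 13, 3, 6, 7])]"]) (simp del: One_nat_def add: ev)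

lemma s42: "strictly_inadmissible 5 (tm [15, 7, 9, 6, 11])"
  by (rule crit2[of _ "[4, 4, 3, 3, 0, 0]" "[(1, [15, 7, 7, 5, 13]), (2, [15, 7, 7, 3, 14]), (2, [15, 7, 7, 6, 11]), (4, [15, 5, 7, 3, 14]), (4, [15, 5, 7, 6, 11])]"]) (simp del: One_nat_def add: ev)

lemma s43: "strictly_inadmissible 5 (tm [15, 7, 9, 7, 10])"
  by (rule crit2[of _ "[4, 4, 3, 3, 0, 0]" "[(1, [15, 5, 7, 7, 13]), (1, [15, 7, 7, 7, 11]), (2, [15, 3, 7, 7, 14]), (2, [15, 6, 7, 7, 11]), (2, [15, 7, 7, 7, 10]), (4, [15, 5, 7, 7, 10])]"]) (simp del: One_nat_def add: ev)

lemma s44: "strictly_inadmissible 5 (tm [15, 7, 9, 14, 3])"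
  by (rule crit2[of _ "[4, 4, 3, 3, 0, 0]" "[(1, [15, 7, 7, 13, 5]), (2, [15, 7, 7, 11, 6]), (2, [15, 7, 7, 14, 3]), (4, [15, 5, 7, 11, 6]), (4, [15, 5, 7, 14, 3])]"]) (simp del: One_nat_def add: ev)

lemma s45: "strictly_inadmissible 5 (tm [15, 7, 11, 7, 8])"
  by (rule crit2[of _ "[4, 4, 3, 3, 0, 0]" "[(1, [15, 5, 13, 7, 7]), (1, [15, 7, 11, 7, 7]), (1, [15, 7, 13, 3, 9]), (1, [15, 7, 13, 5, 7]), (2, [15, 3, 14, 7, 7]), (2, [15, 6, 11, 7, 7]), (2, [15, 7, 10, 7, 7]), (2, [15, 7, 11, 3, 10]), (2, [15, 7, 11, 6, 7]), (2, [15, 7, 14, 3, 7]), (4, [15, 5, 10, 7, 7]), (4, [15, 5, 11, 6, 7]), (4, [15, 5, 14, 3, 7])]"]) (simp del: One_nat_def add: ev)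

lemma s46: "strictly_inadmissible 5 (tm [7, 15, 8, 7, 11])"
  by (rule crit2[of _ "[4, 4, 3, 3, 0, 0]" "[(1, [7, 15, 5, 7, 13]), (2, [7, 15, 3, 7, 14]), (2, [7, 15, 6, 7, 11]), (4, [5, 15, 3, 7, 14]), (4, [5, 15, 6, 7, 11])]"]) (simp del: One_nat_def add: ev)

lemma s47: "strictly_inadmissible 5 (tm [7, 15, 9, 3, 14])"
  by (rule crit2[of _ "[4, 4, 3, 3, 0, 0]" "[(1, [5, 15, 7, 13, 7]), (1, [7, 15, 7, 5, 13]), (1, [7, 15, 7, 11, 7]), (1, [11, 15, 3, 5, 13]), (2, [3, 15, 7, 14, 7]), (2, [6, 15, 7, 11, 7]), (2, [7, 15, 7, 3, 14]), (2, [7, 15, 7, 6, 11]), (2, [7, 15, 7, 10, 7]), (2, [11, 15, 3, 6, 11]), (2, [11, 15, 3, 10, 7]), (4, [5, 15, 7, 3, 14]), (4, [5, 15, 7, 6, 11]), (4, [5, 15, 7, 10, 7]), (4, [7, 15, 3, 5, 14]), (4, [7, 15, 3, 12, 7]), (4, [7, 15, 5, 6, 11]), (4, [7, 15, 5, 10, 7]), (4, [13, 15, 3, 6, 7])]"]) (simp del: One_nat_def add: ev)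

lemma s48: "strictly_inadmissible 5 (tm [7, 15, 9, 6, 11])"
  by (rule crit2[of _ "[4, 4, 3, 3, 0, 0]" "[(1, [7, 15, 7, 5, 13]), (2, [7, 15, 7, 3, 14]), (2, [7, 15, 7, 6, 11]), (4, [5, 15, 7, 3, 14]), (4, [5, 15, 7, 6, 11])]"]) (simp del: One_nat_def add: ev)

lemma s49: "strictly_inadmissible 5 (tm [7, 15, 9, 7, 10])"
  by (rule crit2[of _ "[4, 4, 3, 3, 0, 0]" "[(1, [5, 15, 7, 7, 13]), (1, [7, 15, 7, 7, 11]), (2, [3, 15, 7, 7, 14]), (2, [6, 15, 7, 7, 11]), (2, [7, 15, 7, 7, 10]), (4, [5, 15, 7, 7, 10])]"]) (simp del: One_nat_def add: ev)

lemma s50: "strictly_inadmissible 5 (tm [7, 15, 9, 14, 3])"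
  by (rule crit2[of _ "[4, 4, 3, 3, 0, 0]" "[(1, [7, 15, 7, 13, 5]), (2, [7, 15, 7, 11, 6]), (2, [7, 15, 7, 14, 3]), (4, [5, 15, 7, 11, 6]), (4, [5, 15, 7, 14, 3])]"]) (simp del: One_nat_def add: ev)

lemma s51: "strictly_inadmissible 5 (tm [7, 15, 11, 7, 8])"
  by (rule crit2[of _ "[4, 4, 3, 3, 0, 0]" "[(1, [5, 15, 13, 7, 7]), (1, [7, 15, 11, 7, 7]), (1, [7, 15, 13, 3, 9]), (1, [7, 15, 13, 5, 7]), (2, [3, 15, 14, 7, 7]), (2, [6, 15, 11, 7, 7]), (2, [7, 15, 10, 7, 7]), (2, [7, 15, 11, 3, 10]), (2, [7, 15, 11, 6, 7]), (2, [7, 15, 14, 3, 7]), (4, [5, 15, 10, 7, 7]), (4, [5, 15, 11, 6, 7]), (4, [5, 15, 14, 3, 7])]"]) (simp del: One_nat_def add: ev)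

lemma s52: "strictly_inadmissible 5 (tm [7, 8, 15, 7, 11])"
  by (rule crit2[of _ "[4, 4, 3, 3, 0, 0]" "[(1, [7, 5, 15, 7, 13]), (2, [7, 3, 15, 7, 14]), (2, [7, 6, 15, 7, 11]), (4, [5, 3, 15, 7, 14]), (4, [5, 6, 15, 7, 11])]"]) (simp del: One_nat_def add: ev)

lemma s53: "strictly_inadmissible 5 (tm [7, 9, 15, 3, 14])"
  by (rule crit2[of _ "[4, 4, 3, 3, 0, 0]" "[(1, [5, 7, 15, 13, 7]), (1, [7, 7, 15, 5, 13]), (1, [7, 7, 15, 11, 7]), (1, [11, 3, 15, 5, 13]), (2, [3, 7, 15, 14, 7]), (2, [6, 7, 15, 11, 7]), (2, [7, 7, 15, 3, 14]), (2, [7, 7, 15, 6, 11]), (2, [7, 7, 15, 10, 7]), (2, [11, 3, 15, 6, 11]), (2, [11, 3, 15, 10, 7]), (4, [5, 7, 15, 3, 14]), (4, [5, 7, 15, 6, 11]), (4, [5, 7, 15, 10, 7]), (4, [7, 3, 15, 5, 14]), (4, [7, 3, 15, 12, 7]), (4, [7, 5, 15, 6, 11]), (4, [7, 5, 15, 10, 7]), (4, [13, 3, 15, 6, 7])]"]) (simp del: One_nat_def add: ev)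

lemma s54: "strictly_inadmissible 5 (tm [7, 9, 15, 6, 11])"
  by (rule crit2[of _ "[4, 4, 3, 3, 0, 0]" "[(1, [7, 7, 15, 5, 13]), (2, [7, 7, 15, 3, 14]), (2, [7, 7, 15, 6, 11]), (4, [5, 7, 15, 3, 14]), (4, [5, 7, 15, 6, 11])]"]) (simp del: One_nat_def add: ev)

lemma s55: "strictly_inadmissible 5 (tm [7, 9, 15, 7, 10])"
  by (rule crit2[of _ "[4, 4, 3, 3, 0, 0]" "[(1, [5, 7, 15, 7, 13]), (1, [7, 7, 15, 7, 11]), (2, [3, 7, 15, 7, 14]), (2, [6, 7, 15, 7, 11]), (2, [7, 7, 15, 7, 10]), (4, [5, 7, 15, 7, 10])]"]) (simp del: One_nat_def add: ev)

lemma s56: "strictly_inadmissible 5 (tm [7, 9, 15, 14, 3])"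
  by (rule crit2[of _ "[4, 4, 3, 3, 0, 0]" "[(1, [7, 7, 15, 13, 5]), (2, [7, 7, 15, 11, 6]), (2, [7, 7, 15, 14, 3]), (4, [5, 7, 15, 11, 6]), (4, [5, 7, 15, 14, 3])]"]) (simp del: One_nat_def add: ev)

lemma s57: "strictly_inadmissible 5 (tm [7, 11, 15, 7, 8])"
  by (rule crit2[of _ "[4, 4, 3, 3, 0, 0]" "[(1, [5, 13, 15, 7, 7]), (1, [7, 11, 15, 7, 7]), (1, [7, 13, 15, 3, 9]), (1, [7, 13, 15, 5, 7]), (2, [3, 14, 15, 7, 7]), (2, [6, 11, 15, 7, 7]), (2, [7, 10, 15, 7, 7]), (2, [7, 11, 15, 3, 10]), (2, [7, 11, 15, 6, 7]), (2, [7, 14, 15, 3, 7]), (4, [5, 10, 15, 7, 7]), (4, [5, 11, 15, 6, 7]), (4, [5, 14, 15, 3, 7])]"]) (simp del: One_nat_def add: ev)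

lemma s58: "strictly_inadmissible 5 (tm [7, 8, 7, 15, 11])"
  by (rule crit2[of _ "[4, 4, 3, 3, 0, 0]" "[(1, [7, 5, 7, 15, 13]), (2, [7, 3, 7, 15, 14]), (2, [7, 6, 7, 15, 11]), (4, [5, 3, 7, 15, 14]), (4, [5, 6, 7, 15, 11])]"]) (simp del: One_nat_def add: ev)

lemma s59: "strictly_inadmissible 5 (tm [7, 9, 3, 15, 14])"
  by (rule crit2[of _ "[4, 4, 3, 3, 0, 0]" "[(1, [5, 7, 13, 15, 7]), (1, [7, 7, 5, 15, 13]), (1, [7, 7, 11, 15, 7]), (1, [11, 3, 5, 15, 13]), (2, [3, 7, 14, 15, 7]), (2, [6, 7, 11, 15, 7]), (2, [7, 7, 3, 15, 14]), (2, [7, 7, 6, 15, 11]), (2, [7, 7, 10, 15, 7]), (2, [11, 3, 6, 15, 11]), (2, [11, 3, 10, 15, 7]), (4, [5, 7, 3, 15, 14]), (4, [5, 7, 6, 15, 11]), (4, [5, 7, 10, 15, 7]), (4, [7, 3, 5, 15, 14]), (4, [7, 3, 12, 15, 7]), (4, [7, 5, 6, 15, 11]), (4, [7, 5, 10, 15, 7]), (4, [13, 3, 6, 15, 7])]"]) (simp del: One_nat_def add: ev)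

lemma s60: "strictly_inadmissible 5 (tm [7, 9, 6, 15, 11])"
  by (rule crit2[of _ "[4, 4, 3, 3, 0, 0]" "[(1, [7, 7, 5, 15, 13]), (2, [7, 7, 3, 15, 14]), (2, [7, 7, 6, 15, 11]), (4, [5, 7, 3, 15, 14]), (4, [5, 7, 6, 15, 11])]"]) (simp del: One_nat_def add: ev)

lemma s61: "strictly_inadmissible 5 (tm [7, 9, 7, 15, 10])"
  by (rule crit2[of _ "[4, 4, 3, 3, 0, 0]" "[(1, [5, 7, 7, 15, 13]), (1, [7, 7, 7, 15, 11]), (2, [3, 7, 7, 15, 14]), (2, [6, 7, 7, 15, 11]), (2, [7, 7, 7, 15, 10]), (4, [5, 7, 7, 15, 10])]"]) (simp del: One_nat_def add: ev)

lemma s62: "strictly_inadmissible 5 (tm [7, 9, 14, 15, 3])"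
  by (rule crit2[of _ "[4, 4, 3, 3, 0, 0]" "[(1, [7, 7, 13, 15, 5]), (2, [7, 7, 11, 15, 6]), (2, [7, 7, 14, 15, 3]), (4, [5, 7, 11, 15, 6]), (4, [5, 7, 14, 15, 3])]"]) (simp del: One_nat_def add: ev)

lemma s63: "strictly_inadmissible 5 (tm [7, 11, 7, 15, 8])"
  by (rule crit2[of _ "[4, 4, 3, 3, 0, 0]" "[(1, [5, 13, 7, 15, 7]), (1, [7, 11, 7, 15, 7]), (1, [7, 13, 3, 15, 9]), (1, [7, 13, 5, 15, 7]), (2, [3, 14, 7, 15, 7]), (2, [6, 11, 7, 15, 7]), (2, [7, 10, 7, 15, 7]), (2, [7, 11, 3, 15, 10]), (2, [7, 11, 6, 15, 7]), (2, [7, 14, 3, 15, 7]), (4, [5, 10, 7, 15, 7]), (4, [5, 11, 6, 15, 7]), (4, [5, 14, 3, 15, 7])]"]) (simp del: One_nat_def add: ev)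

lemma s64: "strictly_inadmissible 5 (tm [7, 8, 7, 11, 15])"
  by (rule crit2[of _ "[4, 4, 3, 3, 0, 0]" "[(1, [7, 5, 7, 13, 15]), (2, [7, 3, 7, 14, 15]), (2, [7, 6, 7, 11, 15]), (4, [5, 3, 7, 14, 15]), (4, [5, 6, 7, 11, 15])]"]) (simp del: One_nat_def add: ev)

lemma s65: "strictly_inadmissible 5 (tm [7, 9, 3, 14, 15])"
  by (rule crit2[of _ "[4, 4, 3, 3, 0, 0]" "[(1, [5, 7, 13, 7, 15]), (1, [7, 7, 5, 13, 15]), (1, [7, 7, 11, 7, 15]), (1, [11, 3, 5, 13, 15]), (2, [3, 7, 14, 7, 15]), (2, [6, 7, 11, 7, 15]), (2, [7, 7, 3, 14, 15]), (2, [7, 7, 6, 11, 15]), (2, [7, 7, 10, 7, 15]), (2, [11, 3, 6, 11, 15]), (2, [11, 3, 10, 7, 15]), (4, [5, 7, 3, 14, 15]), (4, [5, 7, 6, 11, 15]), (4, [5, 7, 10, 7, 15]), (4, [7, 3, 5, 14, 15]), (4, [7, 3, 12, 7, 15]), (4, [7, 5, 6, 11, 15]), (4, [7, 5, 10, 7, 15]), (4, [13, 3, 6, 7, 15])]"]) (simp del: One_nat_def add: ev)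

lemma s66: "strictly_inadmissible 5 (tm [7, 9, 6, 11, 15])"
  by (rule crit2[of _ "[4, 4, 3, 3, 0, 0]" "[(1, [7, 7, 5, 13, 15]), (2, [7, 7, 3, 14, 15]), (2, [7, 7, 6, 11, 15]), (4, [5, 7, 3, 14, 15]), (4, [5, 7, 6, 11, 15])]"]) (simp del: One_nat_def add: ev)

lemma s67: "strictly_inadmissible 5 (tm [7, 9, 7, 10, 15])"
  by (rule crit2[of _ "[4, 4, 3, 3, 0, 0]" "[(1, [5, 7, 7, 13, 15]), (1, [7, 7, 7, 11, 15]), (2, [3, 7, 7, 14, 15]), (2, [6, 7, 7, 11, 15]), (2, [7, 7, 7, 10, 15]), (4, [5, 7, 7, 10, 15])]"]) (simp del: One_nat_def add: ev)

lemma s68: "strictly_inadmissible 5 (tm [7, 9, 14, 3, 15])"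
  by (rule crit2[of _ "[4, 4, 3, 3, 0, 0]" "[(1, [7, 7, 13, 5, 15]), (2, [7, 7, 11, 6, 15]), (2, [7, 7, 14, 3, 15]), (4, [5, 7, 11, 6, 15]), (4, [5, 7, 14, 3, 15])]"]) (simp del: One_nat_def add: ev)

lemma s69: "strictly_inadmissible 5 (tm [7, 11, 7, 8, 15])"
  by (rule crit2[of _ "[4, 4, 3, 3, 0, 0]" "[(1, [5, 13, 7, 7, 15]), (1, [7, 11, 7, 7, 15]), (1, [7, 13, 3, 9, 15]), (1, [7, 13, 5, 7, 15]), (2, [3, 14, 7, 7, 15]), (2, [6, 11, 7, 7, 15]), (2, [7, 10, 7, 7, 15]), (2, [7, 11, 3, 10, 15]), (2, [7, 11, 6, 7, 15]), (2, [7, 14, 3, 7, 15]), (4, [5, 10, 7, 7, 15]), (4, [5, 11, 6, 7, 15]), (4, [5, 14, 3, 7, 15])]"]) (simp del: One_nat_def add: ev)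

lemma s70: "strictly_inadmissible 5 (tm [7, 9, 7, 14, 11])"
  by (rule crit2[of _ "[4, 4, 3, 3, 0, 0]" "[(1, [7, 7, 7, 13, 13]), (2, [7, 7, 7, 11, 14]), (2, [7, 7, 7, 14, 11]), (4, [5, 7, 7, 11, 14]), (4, [5, 7, 7, 14, 11])]"]) (simp del: One_nat_def add: ev)

lemma s71: "strictly_inadmissible 5 (tm [7, 9, 14, 7, 11])"
  by (rule crit2[of _ "[4, 4, 3, 3, 0, 0]" "[(1, [7, 7, 13, 7, 13]), (2, [7, 7, 11, 7, 14]), (2, [7, 7, 14, 7, 11]), (4, [5, 7, 11, 7, 14]), (4, [5, 7, 14, 7, 11])]"]) (simp del: One_nat_def add: ev)

lemma p1_0: "strictly_inadmissible 5 (mon [(1,7),(2,9),(3,2),(4,15),(5,15)]) \<and>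
    strictly_inadmissible 5 (mon [(1,3),(2,7),(3,8),(4,15),(5,15)]) \<and>
    strictly_inadmissible 5 (mon [(1,7),(2,3),(3,8),(4,15),(5,15)]) \<and>
    strictly_inadmissible 5 (mon [(1,7),(2,8),(3,3),(4,15),(5,15)])"
  by (intro conjI) ((rule si_fun[OF s0]; simp add: mon_def), (rule si_fun[OF s1]; simp add: mon_def), (rule si_fun[OF s2]; simp add: mon_def), (rule si_fun[OF s3]; simp add: mon_def))

lemma p1_1: "strictly_inadmissible 5 (mon [(1,7),(2,9),(3,2),(5,15),(4,15)]) \<and>
    strictly_inadmissible 5 (mon [(1,3),(2,7),(3,8),(5,15),(4,15)]) \<and>
    strictly_inadmissible 5 (mon [(1,7),(2,3),(3,8),(5,15),(4,15)]) \<and>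
    strictly_inadmissible 5 (mon [(1,7),(2,8),(3,3),(5,15),(4,15)])"
  by (intro conjI) ((rule si_fun[OF s0]; simp add: mon_def), (rule si_fun[OF s1]; simp add: mon_def), (rule si_fun[OF s2]; simp add: mon_def), (rule si_fun[OF s3]; simp add: mon_def))

lemma p1_2: "strictly_inadmissible 5 (mon [(1,7),(2,9),(4,2),(3,15),(5,15)]) \<and>
    strictly_inadmissible 5 (mon [(1,3),(2,7),(4,8),(3,15),(5,15)]) \<and>
    strictly_inadmissible 5 (mon [(1,7),(2,3),(4,8),(3,15),(5,15)]) \<and>
    strictly_inadmissible 5 (mon [(1,7),(2,8),(4,3),(3,15),(5,15)])"
  by (intro conjI) ((rule si_fun[OF s4]; simp add: mon_def), (rule si_fun[OF s5]; simp add: mon_def), (rule si_fun[OF s6]; simp add: mon_def), (rule si_fun[OF s7]; simp add: mon_def))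

lemma p1_3: "strictly_inadmissible 5 (mon [(1,7),(2,9),(4,2),(5,15),(3,15)]) \<and>
    strictly_inadmissible 5 (mon [(1,3),(2,7),(4,8),(5,15),(3,15)]) \<and>
    strictly_inadmissible 5 (mon [(1,7),(2,3),(4,8),(5,15),(3,15)]) \<and>
    strictly_inadmissible 5 (mon [(1,7),(2,8),(4,3),(5,15),(3,15)])"
  by (intro conjI) ((rule si_fun[OF s4]; simp add: mon_def), (rule si_fun[OF s5]; simp add: mon_def), (rule si_fun[OF s6]; simp add: mon_def), (rule si_fun[OF s7]; simp add: mon_def))

lemma p1_4: "strictly_inadmissible 5 (mon [(1,7),(2,9),(5,2),(3,15),(4,15)]) \<and>
    strictly_inadmissible 5 (mon [(1,3),(2,7),(5,8),(3,15),(4,15)]) \<and>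
    strictly_inadmissible 5 (mon [(1,7),(2,3),(5,8),(3,15),(4,15)]) \<and>
    strictly_inadmissible 5 (mon [(1,7),(2,8),(5,3),(3,15),(4,15)])"
  by (intro conjI) ((rule si_fun[OF s8]; simp add: mon_def), (rule si_fun[OF s9]; simp add: mon_def), (rule si_fun[OF s10]; simp add: mon_def), (rule si_fun[OF s11]; simp add: mon_def))

lemma p1_5: "strictly_inadmissible 5 (mon [(1,7),(2,9),(5,2),(4,15),(3,15)]) \<and>
    strictly_inadmissible 5 (mon [(1,3),(2,7),(5,8),(4,15),(3,15)]) \<and>
    strictly_inadmissible 5 (mon [(1,7),(2,3),(5,8),(4,15),(3,15)]) \<and>
    strictly_inadmissible 5 (mon [(1,7),(2,8),(5,3),(4,15),(3,15)])"
  by (intro conjI) ((rule si_fun[OF s8]; simp add: mon_def), (rule si_fun[OF s9]; simp add: mon_def), (rule si_fun[OF s10]; simp add: mon_def), (rule si_fun[OF s11]; simp add: mon_def))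

lemma p1_6: "strictly_inadmissible 5 (mon [(1,7),(3,9),(4,2),(2,15),(5,15)]) \<and>
    strictly_inadmissible 5 (mon [(1,3),(3,7),(4,8),(2,15),(5,15)]) \<and>
    strictly_inadmissible 5 (mon [(1,7),(3,3),(4,8),(2,15),(5,15)]) \<and>
    strictly_inadmissible 5 (mon [(1,7),(3,8),(4,3),(2,15),(5,15)])"
  by (intro conjI) ((rule si_fun[OF s12]; simp add: mon_def), (rule si_fun[OF s13]; simp add: mon_def), (rule si_fun[OF s14]; simp add: mon_def), (rule si_fun[OF s15]; simp add: mon_def))

lemma p1_7: "strictly_inadmissible 5 (mon [(1,7),(3,9),(4,2),(5,15),(2,15)]) \<and>
    strictly_inadmissible 5 (mon [(1,3),(3,7),(4,8),(5,15),(2,15)]) \<and>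
    strictly_inadmissible 5 (mon [(1,7),(3,3),(4,8),(5,15),(2,15)]) \<and>
    strictly_inadmissible 5 (mon [(1,7),(3,8),(4,3),(5,15),(2,15)])"
  by (intro conjI) ((rule si_fun[OF s12]; simp add: mon_def), (rule si_fun[OF s13]; simp add: mon_def), (rule si_fun[OF s14]; simp add: mon_def), (rule si_fun[OF s15]; simp add: mon_def))

lemma p1_8: "strictly_inadmissible 5 (mon [(1,7),(3,9),(5,2),(2,15),(4,15)]) \<and>
    strictly_inadmissible 5 (mon [(1,3),(3,7),(5,8),(2,15),(4,15)]) \<and>
    strictly_inadmissible 5 (mon [(1,7),(3,3),(5,8),(2,15),(4,15)]) \<and>
    strictly_inadmissible 5 (mon [(1,7),(3,8),(5,3),(2,15),(4,15)])"
  by (intro conjI) ((rule si_fun[OF s16]; simp add: mon_def), (rule si_fun[OF s17]; simp add: mon_def), (rule si_fun[OF s18]; simp add: mon_def), (rule si_fun[OF s19]; simp add: mon_def))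

lemma p1_9: "strictly_inadmissible 5 (mon [(1,7),(3,9),(5,2),(4,15),(2,15)]) \<and>
    strictly_inadmissible 5 (mon [(1,3),(3,7),(5,8),(4,15),(2,15)]) \<and>
    strictly_inadmissible 5 (mon [(1,7),(3,3),(5,8),(4,15),(2,15)]) \<and>
    strictly_inadmissible 5 (mon [(1,7),(3,8),(5,3),(4,15),(2,15)])"
  by (intro conjI) ((rule si_fun[OF s16]; simp add: mon_def), (rule si_fun[OF s17]; simp add: mon_def), (rule si_fun[OF s18]; simp add: mon_def), (rule si_fun[OF s19]; simp add: mon_def))

lemma p1_10: "strictly_inadmissible 5 (mon [(1,7),(4,9),(5,2),(2,15),(3,15)]) \<and>
    strictly_inadmissible 5 (mon [(1,3),(4,7),(5,8),(2,15),(3,15)]) \<and>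
    strictly_inadmissible 5 (mon [(1,7),(4,3),(5,8),(2,15),(3,15)]) \<and>
    strictly_inadmissible 5 (mon [(1,7),(4,8),(5,3),(2,15),(3,15)])"
  by (intro conjI) ((rule si_fun[OF s20]; simp add: mon_def), (rule si_fun[OF s21]; simp add: mon_def), (rule si_fun[OF s22]; simp add: mon_def), (rule si_fun[OF s23]; simp add: mon_def))

lemma p1_11: "strictly_inadmissible 5 (mon [(1,7),(4,9),(5,2),(3,15),(2,15)]) \<and>
    strictly_inadmissible 5 (mon [(1,3),(4,7),(5,8),(3,15),(2,15)]) \<and>
    strictly_inadmissible 5 (mon [(1,7),(4,3),(5,8),(3,15),(2,15)]) \<and>
    strictly_inadmissible 5 (mon [(1,7),(4,8),(5,3),(3,15),(2,15)])"
  by (intro conjI) ((rule si_fun[OF s20]; simp add: mon_def), (rule si_fun[OF s21]; simp add: mon_def), (rule si_fun[OF s22]; simp add: mon_def), (rule si_fun[OF s23]; simp add: mon_def))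

lemma p1_12: "strictly_inadmissible 5 (mon [(2,7),(3,9),(4,2),(1,15),(5,15)]) \<and>
    strictly_inadmissible 5 (mon [(2,3),(3,7),(4,8),(1,15),(5,15)]) \<and>
    strictly_inadmissible 5 (mon [(2,7),(3,3),(4,8),(1,15),(5,15)]) \<and>
    strictly_inadmissible 5 (mon [(2,7),(3,8),(4,3),(1,15),(5,15)])"
  by (intro conjI) ((rule si_fun[OF s24]; simp add: mon_def), (rule si_fun[OF s25]; simp add: mon_def), (rule si_fun[OF s26]; simp add: mon_def), (rule si_fun[OF s27]; simp add: mon_def))

lemma p1_13: "strictly_inadmissible 5 (mon [(2,7),(3,9),(4,2),(5,15),(1,15)]) \<and>
    strictly_inadmissible 5 (mon [(2,3),(3,7),(4,8),(5,15),(1,15)]) \<and>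
    strictly_inadmissible 5 (mon [(2,7),(3,3),(4,8),(5,15),(1,15)]) \<and>
    strictly_inadmissible 5 (mon [(2,7),(3,8),(4,3),(5,15),(1,15)])"
  by (intro conjI) ((rule si_fun[OF s24]; simp add: mon_def), (rule si_fun[OF s25]; simp add: mon_def), (rule si_fun[OF s26]; simp add: mon_def), (rule si_fun[OF s27]; simp add: mon_def))

lemma p1_14: "strictly_inadmissible 5 (mon [(2,7),(3,9),(5,2),(1,15),(4,15)]) \<and>
    strictly_inadmissible 5 (mon [(2,3),(3,7),(5,8),(1,15),(4,15)]) \<and>
    strictly_inadmissible 5 (mon [(2,7),(3,3),(5,8),(1,15),(4,15)]) \<and>
    strictly_inadmissible 5 (mon [(2,7),(3,8),(5,3),(1,15),(4,15)])"
  by (intro conjI) ((rule si_fun[OF s28]; simp add: mon_def), (rule si_fun[OF s29]; simp add: mon_def), (rule si_fun[OF s30]; simp add: mon_def), (rule si_fun[OF s31]; simp add: mon_def))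

lemma p1_15: "strictly_inadmissible 5 (mon [(2,7),(3,9),(5,2),(4,15),(1,15)]) \<and>
    strictly_inadmissible 5 (mon [(2,3),(3,7),(5,8),(4,15),(1,15)]) \<and>
    strictly_inadmissible 5 (mon [(2,7),(3,3),(5,8),(4,15),(1,15)]) \<and>
    strictly_inadmissible 5 (mon [(2,7),(3,8),(5,3),(4,15),(1,15)])"
  by (intro conjI) ((rule si_fun[OF s28]; simp add: mon_def), (rule si_fun[OF s29]; simp add: mon_def), (rule si_fun[OF s30]; simp add: mon_def), (rule si_fun[OF s31]; simp add: mon_def))

lemma p1_16: "strictly_inadmissible 5 (mon [(2,7),(4,9),(5,2),(1,15),(3,15)]) \<and>
    strictly_inadmissible 5 (mon [(2,3),(4,7),(5,8),(1,15),(3,15)]) \<and>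
    strictly_inadmissible 5 (mon [(2,7),(4,3),(5,8),(1,15),(3,15)]) \<and>
    strictly_inadmissible 5 (mon [(2,7),(4,8),(5,3),(1,15),(3,15)])"
  by (intro conjI) ((rule si_fun[OF s32]; simp add: mon_def), (rule si_fun[OF s33]; simp add: mon_def), (rule si_fun[OF s34]; simp add: mon_def), (rule si_fun[OF s35]; simp add: mon_def))

lemma p1_17: "strictly_inadmissible 5 (mon [(2,7),(4,9),(5,2),(3,15),(1,15)]) \<and>
    strictly_inadmissible 5 (mon [(2,3),(4,7),(5,8),(3,15),(1,15)]) \<and>
    strictly_inadmissible 5 (mon [(2,7),(4,3),(5,8),(3,15),(1,15)]) \<and>
    strictly_inadmissible 5 (mon [(2,7),(4,8),(5,3),(3,15),(1,15)])"
  by (intro conjI) ((rule si_fun[OF s32]; simp add: mon_def), (rule si_fun[OF s33]; simp add: mon_def), (rule si_fun[OF s34]; simp add: mon_def), (rule si_fun[OF s35]; simp add: mon_def))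

lemma p1_18: "strictly_inadmissible 5 (mon [(3,7),(4,9),(5,2),(1,15),(2,15)]) \<and>
    strictly_inadmissible 5 (mon [(3,3),(4,7),(5,8),(1,15),(2,15)]) \<and>
    strictly_inadmissible 5 (mon [(3,7),(4,3),(5,8),(1,15),(2,15)]) \<and>
    strictly_inadmissible 5 (mon [(3,7),(4,8),(5,3),(1,15),(2,15)])"
  by (intro conjI) ((rule si_fun[OF s36]; simp add: mon_def), (rule si_fun[OF s37]; simp add: mon_def), (rule si_fun[OF s38]; simp add: mon_def), (rule si_fun[OF s39]; simp add: mon_def))

lemma p1_19: "strictly_inadmissible 5 (mon [(3,7),(4,9),(5,2),(2,15),(1,15)]) \<and>
    strictly_inadmissible 5 (mon [(3,3),(4,7),(5,8),(2,15),(1,15)]) \<and>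
    strictly_inadmissible 5 (mon [(3,7),(4,3),(5,8),(2,15),(1,15)]) \<and>
    strictly_inadmissible 5 (mon [(3,7),(4,8),(5,3),(2,15),(1,15)])"
  by (intro conjI) ((rule si_fun[OF s36]; simp add: mon_def), (rule si_fun[OF s37]; simp add: mon_def), (rule si_fun[OF s38]; simp add: mon_def), (rule si_fun[OF s39]; simp add: mon_def))

lemma p2_1_0: "strictly_inadmissible 5 (mmul (mon [(1,15)]) (theta 1 (mon [(1,7),(2,8),(3,7),(4,11)])))"
  by (rule si_fun[OF s40]) (simp_all add: mon_def mmul_def theta_eval Jr_def)

lemma p2_1_1: "strictly_inadmissible 5 (mmul (mon [(1,15)]) (theta 1 (mon [(1,7),(2,9),(3,3),(4,14)])))"
  by (rule si_fun[OF s41]) (simp_all add: mon_def mmul_def theta_eval Jr_def)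

lemma p2_1_2: "strictly_inadmissible 5 (mmul (mon [(1,15)]) (theta 1 (mon [(1,7),(2,9),(3,6),(4,11)])))"
  by (rule si_fun[OF s42]) (simp_all add: mon_def mmul_def theta_eval Jr_def)

lemma p2_1_3: "strictly_inadmissible 5 (mmul (mon [(1,15)]) (theta 1 (mon [(1,7),(2,9),(3,7),(4,10)])))"
  by (rule si_fun[OF s43]) (simp_all add: mon_def mmul_def theta_eval Jr_def)

lemma p2_1_4: "strictly_inadmissible 5 (mmul (mon [(1,15)]) (theta 1 (mon [(1,7),(2,9),(3,14),(4,3)])))"
  by (rule si_fun[OF s44]) (simp_all add: mon_def mmul_def theta_eval Jr_def)

lemma p2_1_5: "strictly_inadmissible 5 (mmul (mon [(1,15)]) (theta 1 (mon [(1,7),(2,11),(3,7),(4,8)])))"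
  by (rule si_fun[OF s45]) (simp_all add: mon_def mmul_def theta_eval Jr_def)

lemma p2_2_0: "strictly_inadmissible 5 (mmul (mon [(2,15)]) (theta 2 (mon [(1,7),(2,8),(3,7),(4,11)])))"
  by (rule si_fun[OF s46]) (simp_all add: mon_def mmul_def theta_eval Jr_def)

lemma p2_2_1: "strictly_inadmissible 5 (mmul (mon [(2,15)]) (theta 2 (mon [(1,7),(2,9),(3,3),(4,14)])))"
  by (rule si_fun[OF s47]) (simp_all add: mon_def mmul_def theta_eval Jr_def)

lemma p2_2_2: "strictly_inadmissible 5 (mmul (mon [(2,15)]) (theta 2 (mon [(1,7),(2,9),(3,6),(4,11)])))"
  by (rule si_fun[OF s48]) (simp_all add: mon_def mmul_def theta_eval Jr_def)

lemma p2_2_3: "strictly_inadmissible 5 (mmul (mon [(2,15)]) (theta 2 (mon [(1,7),(2,9),(3,7),(4,10)])))"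
  by (rule si_fun[OF s49]) (simp_all add: mon_def mmul_def theta_eval Jr_def)

lemma p2_2_4: "strictly_inadmissible 5 (mmul (mon [(2,15)]) (theta 2 (mon [(1,7),(2,9),(3,14),(4,3)])))"
  by (rule si_fun[OF s50]) (simp_all add: mon_def mmul_def theta_eval Jr_def)

lemma p2_2_5: "strictly_inadmissible 5 (mmul (mon [(2,15)]) (theta 2 (mon [(1,7),(2,11),(3,7),(4,8)])))"
  by (rule si_fun[OF s51]) (simp_all add: mon_def mmul_def theta_eval Jr_def)

lemma p2_3_0: "strictly_inadmissible 5 (mmul (mon [(3,15)]) (theta 3 (mon [(1,7),(2,8),(3,7),(4,11)])))"
  by (rule si_fun[OF s52]) (simp_all add: mon_def mmul_def theta_eval Jr_def)

lemma p2_3_1: "strictly_inadmissible 5 (mmul (mon [(3,15)]) (theta 3 (mon [(1,7),(2,9),(3,3),(4,14)])))"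
  by (rule si_fun[OF s53]) (simp_all add: mon_def mmul_def theta_eval Jr_def)

lemma p2_3_2: "strictly_inadmissible 5 (mmul (mon [(3,15)]) (theta 3 (mon [(1,7),(2,9),(3,6),(4,11)])))"
  by (rule si_fun[OF s54]) (simp_all add: mon_def mmul_def theta_eval Jr_def)

lemma p2_3_3: "strictly_inadmissible 5 (mmul (mon [(3,15)]) (theta 3 (mon [(1,7),(2,9),(3,7),(4,10)])))"
  by (rule si_fun[OF s55]) (simp_all add: mon_def mmul_def theta_eval Jr_def)

lemma p2_3_4: "strictly_inadmissible 5 (mmul (mon [(3,15)]) (theta 3 (mon [(1,7),(2,9),(3,14),(4,3)])))"
  by (rule si_fun[OF s56]) (simp_all add: mon_def mmul_def theta_eval Jr_def)

lemma p2_3_5: "strictly_inadmissible 5 (mmul (mon [(3,15)]) (theta 3 (mon [(1,7),(2,11),(3,7),(4,8)])))"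
  by (rule si_fun[OF s57]) (simp_all add: mon_def mmul_def theta_eval Jr_def)

lemma p2_4_0: "strictly_inadmissible 5 (mmul (mon [(4,15)]) (theta 4 (mon [(1,7),(2,8),(3,7),(4,11)])))"
  by (rule si_fun[OF s58]) (simp_all add: mon_def mmul_def theta_eval Jr_def)

lemma p2_4_1: "strictly_inadmissible 5 (mmul (mon [(4,15)]) (theta 4 (mon [(1,7),(2,9),(3,3),(4,14)])))"
  by (rule si_fun[OF s59]) (simp_all add: mon_def mmul_def theta_eval Jr_def)

lemma p2_4_2: "strictly_inadmissible 5 (mmul (mon [(4,15)]) (theta 4 (mon [(1,7),(2,9),(3,6),(4,11)])))"
  by (rule si_fun[OF s60]) (simp_all add: mon_def mmul_def theta_eval Jr_def)

lemma p2_4_3: "strictly_inadmissible 5 (mmul (mon [(4,15)]) (theta 4 (mon [(1,7),(2,9),(3,7),(4,10)])))"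
  by (rule si_fun[OF s61]) (simp_all add: mon_def mmul_def theta_eval Jr_def)

lemma p2_4_4: "strictly_inadmissible 5 (mmul (mon [(4,15)]) (theta 4 (mon [(1,7),(2,9),(3,14),(4,3)])))"
  by (rule si_fun[OF s62]) (simp_all add: mon_def mmul_def theta_eval Jr_def)

lemma p2_4_5: "strictly_inadmissible 5 (mmul (mon [(4,15)]) (theta 4 (mon [(1,7),(2,11),(3,7),(4,8)])))"
  by (rule si_fun[OF s63]) (simp_all add: mon_def mmul_def theta_eval Jr_def)

lemma p2_5_0: "strictly_inadmissible 5 (mmul (mon [(5,15)]) (theta 5 (mon [(1,7),(2,8),(3,7),(4,11)])))"
  by (rule si_fun[OF s64]) (simp_all add: mon_def mmul_def theta_eval Jr_def)

lemma p2_5_1: "strictly_inadmissible 5 (mmul (mon [(5,15)]) (theta 5 (mon [(1,7),(2,9),(3,3),(4,14)])))"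
  by (rule si_fun[OF s65]) (simp_all add: mon_def mmul_def theta_eval Jr_def)

lemma p2_5_2: "strictly_inadmissible 5 (mmul (mon [(5,15)]) (theta 5 (mon [(1,7),(2,9),(3,6),(4,11)])))"
  by (rule si_fun[OF s66]) (simp_all add: mon_def mmul_def theta_eval Jr_def)

lemma p2_5_3: "strictly_inadmissible 5 (mmul (mon [(5,15)]) (theta 5 (mon [(1,7),(2,9),(3,7),(4,10)])))"
  by (rule si_fun[OF s67]) (simp_all add: mon_def mmul_def theta_eval Jr_def)

lemma p2_5_4: "strictly_inadmissible 5 (mmul (mon [(5,15)]) (theta 5 (mon [(1,7),(2,9),(3,14),(4,3)])))"
  by (rule si_fun[OF s68]) (simp_all add: mon_def mmul_def theta_eval Jr_def)

lemma p2_5_5: "strictly_inadmissible 5 (mmul (mon [(5,15)]) (theta 5 (mon [(1,7),(2,11),(3,7),(4,8)])))"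
  by (rule si_fun[OF s69]) (simp_all add: mon_def mmul_def theta_eval Jr_def)

lemma p3_0: "strictly_inadmissible 5 (mon [(1,7),(2,9),(3,7),(4,14),(5,11)])"
  by (rule si_fun[OF s70]) (simp_all add: mon_def)

lemma p3_1: "strictly_inadmissible 5 (mon [(1,7),(2,9),(3,14),(4,7),(5,11)])"
  by (rule si_fun[OF s71]) (simp_all add: mon_def)

theorem lemma3p8:
  shows "(\<forall>i j t u v. {i, j, t, u, v} = {1..5::nat} \<and> i < j \<and> j < t \<longrightarrow>
            strictly_inadmissible 5 (mon [(i,7),(j,9),(t,2),(u,15),(v,15)]) \<and>
            strictly_inadmissible 5 (mon [(i,3),(j,7),(t,8),(u,15),(v,15)]) \<and>
            strictly_inadmissible 5 (mon [(i,7),(j,3),(t,8),(u,15),(v,15)]) \<and>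
            strictly_inadmissible 5 (mon [(i,7),(j,8),(t,3),(u,15),(v,15)]))
       \<and> (\<forall>r\<in>{1..5::nat}. \<forall>w\<in>set [mon [(1,7),(2,8),(3,7),(4,11)], mon [(1,7),(2,9),(3,3),(4,14)],
                                  mon [(1,7),(2,9),(3,6),(4,11)], mon [(1,7),(2,9),(3,7),(4,10)],
                                  mon [(1,7),(2,9),(3,14),(4,3)], mon [(1,7),(2,11),(3,7),(4,8)]].
            strictly_inadmissible 5 (mmul (mon [(r,15)]) (theta r w)))
       \<and> strictly_inadmissible 5 (mon [(1,7),(2,9),(3,7),(4,14),(5,11)])
       \<and> strictly_inadmissible 5 (mon [(1,7),(2,9),(3,14),(4,7),(5,11)])"
proof (intro conjI)
  show "\<forall>i j t u v. {i, j, t, u, v} = {1..5::nat} \<and> i < j \<and> j < t \<longrightarrow>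
            strictly_inadmissible 5 (mon [(i,7),(j,9),(t,2),(u,15),(v,15)]) \<and>
            strictly_inadmissible 5 (mon [(i,3),(j,7),(t,8),(u,15),(v,15)]) \<and>
            strictly_inadmissible 5 (mon [(i,7),(j,3),(t,8),(u,15),(v,15)]) \<and>
            strictly_inadmissible 5 (mon [(i,7),(j,8),(t,3),(u,15),(v,15)])"
  proof (intro allI impI)
    fix i j t u v :: nat
    assume h: "{i, j, t, u, v} = {1..5::nat} \<and> i < j \<and> j < t"
    then have "(i,j,t,u,v) \<in> set [(1,2,3,4,5), (1,2,3,5,4), (1,2,4,3,5), (1,2,4,5,3), (1,2,5,3,4), (1,2,5,4,3), (1,3,4,2,5), (1,3,4,5,2), (1,3,5,2,4), (1,3,5,4,2), (1,4,5,2,3), (1,4,5,3,2), (2,3,4,1,5), (2,3,4,5,1), (2,3,5,1,4), (2,3,5,4,1), (2,4,5,1,3), (2,4,5,3,1), (3,4,5,1,2), (3,4,5,2,1)]" using key by blast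
    then show "strictly_inadmissible 5 (mon [(i,7),(j,9),(t,2),(u,15),(v,15)]) \<and>
            strictly_inadmissible 5 (mon [(i,3),(j,7),(t,8),(u,15),(v,15)]) \<and>
            strictly_inadmissible 5 (mon [(i,7),(j,3),(t,8),(u,15),(v,15)]) \<and>
            strictly_inadmissible 5 (mon [(i,7),(j,8),(t,3),(u,15),(v,15)])"
      unfolding list.set insert_iff empty_iff prod.inject
      by (elim disjE conjE; simp del: One_nat_def add: p1_0 p1_1 p1_2 p1_3 p1_4 p1_5 p1_6 p1_7 p1_8 p1_9 p1_10 p1_11 p1_12 p1_13 p1_14 p1_15 p1_16 p1_17 p1_18 p1_19)
  qed
  show "\<forall>r\<in>{1..5::nat}. \<forall>w\<in>set [mon [(1,7),(2,8),(3,7),(4,11)], mon [(1,7),(2,9),(3,3),(4,14)], mon [(1,7),(2,9),(3,6),(4,11)], mon [(1,7),(2,9),(3,7),(4,10)], mon [(1,7),(2,9),(3,14),(4,3)], mon [(1,7),(2,11),(3,7),(4,8)]].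
            strictly_inadmissible 5 (mmul (mon [(r,15)]) (theta r w))"
  proof (intro ballI)
    fix r w assume r: "r \<in> {1..5::nat}" and w: "w \<in> set [mon [(1,7),(2,8),(3,7),(4,11)], mon [(1,7),(2,9),(3,3),(4,14)], mon [(1,7),(2,9),(3,6),(4,11)], mon [(1,7),(2,9),(3,7),(4,10)], mon [(1,7),(2,9),(3,14),(4,3)], mon [(1,7),(2,11),(3,7),(4,8)]]"
    from r have "r = 1 \<or> r = 2 \<or> r = 3 \<or> r = 4 \<or> r = 5" by auto
    moreover from w have "w = mon [(1,7),(2,8),(3,7),(4,11)] \<or> w = mon [(1,7),(2,9),(3,3),(4,14)] \<or> w = mon [(1,7),(2,9),(3,6),(4,11)] \<or> w = mon [(1,7),(2,9),(3,7),(4,10)] \<or> w = mon [(1,7),(2,9),(3,14),(4,3)] \<or> w = mon [(1,7),(2,11),(3,7),(4,8)]" by simp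
    ultimately show "strictly_inadmissible 5 (mmul (mon [(r,15)]) (theta r w))"
      by (elim disjE; simp del: One_nat_def add: p2_1_0 p2_1_1 p2_1_2 p2_1_3 p2_1_4 p2_1_5 p2_2_0 p2_2_1 p2_2_2 p2_2_3 p2_2_4 p2_2_5 p2_3_0 p2_3_1 p2_3_2 p2_3_3 p2_3_4 p2_3_5 p2_4_0 p2_4_1 p2_4_2 p2_4_3 p2_4_4 p2_4_5 p2_5_0 p2_5_1 p2_5_2 p2_5_3 p2_5_4 p2_5_5)
  qed
  show "strictly_inadmissible 5 (mon [(1,7),(2,9),(3,7),(4,14),(5,11)])" by (rule p3_0)
  show "strictly_inadmissible 5 (mon [(1,7),(2,9),(3,14),(4,7),(5,11)])" by (rule p3_1)
qed

end
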